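(* Consider the gradient flow $\frac{d}{dt}(\mathbf P(t),\mathbf V(t))=-\nabla\mathcal L(\mathbf P(t),\mathbf V(t))$ for the population loss $\mathcal L$. Then: (i) The blocks $\mathbf P_{11},\mathbf P_{21},\mathbf V_{11},\mathbf V_{12}$ and the first rows of $\mathbf V_{21},\mathbf V_{22}$ do not affect the transformer output $\mathsf{TF}_{(\mathbf P,\mathbf V)}(\mathbf H(z))$; the gradient of $\mathcal L$ with respect to each of them is zero, so they remain unchanged throughout the flow. (ii) The gradients of $\mathcal L$ with respect to $\mathbf P_{22}$ and $\bar{\mathbf V}_{22}$ vanish whenever $\mathbf P_{22}=\mathbf 0$ and $\bar{\mathbf V}_{22}=\mathbf 0$; consequently, if $\mathbf P_{22}(0)=\mathbf 0$ and $\bar{\mathbf V}_{22}(0)=\mathbf 0$, then (the gradient flow admits a solution with) $\mathbf P_{22}(t)=\mathbf 0$ and $\bar{\mathbf V}_{22}(t)=\mathbf 0$ for all $t\ge0$.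
   Context: Setting: $d,n\ge1$, $\gamma\in[0,1)$, $\alpha>0$, $D=3d+2$. A linear self-attention block with parameters $(\mathbf P,\mathbf V)\in\mathbb R^{D\times D}\times\mathbb R^{D\times D}$ maps $\mathbf H$ to $\mathbf H+\frac1n(\mathbf V\mathbf H)(\mathbf H^\top\mathbf P\mathbf H)$, and $\mathsf{TF}_{(\mathbf P,\mathbf V)}(\mathbf H)$ is the last $d$ entries of the last column of this output. Partition $\mathbf P=\begin{bmatrix}\mathbf P_{11}&\mathbf P_{12}\\ \mathbf P_{21}&\mathbf P_{22}\end{bmatrix}$, $\mathbf V=\begin{bmatrix}\mathbf V_{11}&\mathbf V_{12}\\ \mathbf V_{21}&\mathbf V_{22}\end{bmatrix}$ with top-left blocks of size $(2d+1)\times(2d+1)$ and bottom-right blocks of size $(d+1)\times(d+1)$; $\bar{\mathbf V}_{21},\bar{\mathbf V}_{22}$ denote the last $d$ rows of $\mathbf V_{21},\mathbf V_{22}$. A random sample $z$ (from a fixed distribution with finite moments as needed) consists of a feature map $\boldsymbol\phi:\mathcal S\times\mathcal A\to\mathbb R^d$, $\mathbf w\in\mathbb R^d$ and a trajectory $(s_0,a_0,r_1,\dots,r_n,s_n,a_n)$. Set $\boldsymbol\phi_i=\boldsymbol\phi(s_i,a_i)$, $\boldsymbol\phi_i^+=\boldsymbol\phi(s_{i+1},a_{i+1})$, $\delta_i=r_{i+1}+\gamma\mathbf w^\top\boldsymbol\phi_i^+-\mathbf w^\top\boldsymbol\phi_i$, $\mathbf x_i=[\boldsymbol\phi_i;\gamma\boldsymbol\phi_i^+;r_{i+1}]$,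 $\tilde{\mathbf w}=[1;\mathbf w]$, prompt $\mathbf H(z)=\begin{bmatrix}\mathbf x_0&\cdots&\mathbf x_{n-1}&\mathbf 0\\ \mathbf 0&\cdots&\mathbf 0&\tilde{\mathbf w}\end{bmatrix}$, and SARSA target $\mathbf w_{\mathrm{SARSA}}(z)=\mathbf w+\frac{\alpha}{n}\sum_{i=0}^{n-1}\delta_i\boldsymbol\phi_i$. The population loss is $\mathcal L(\mathbf P,\mathbf V)=\mathbb E_z\big[\tfrac12\|\mathsf{TF}_{(\mathbf P,\mathbf V)}(\mathbf H(z))-\mathbf w_{\mathrm{SARSA}}(z)\|^2\big]$. *)

theory Defs
  imports "HOL-Analysis.Analysis" "HOL-Probability.Probability"
begin

text \<open>The rows of a prompt are indexed by the type ('d idx), of cardinality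
 (d + d + 1) + (1 + d) = 3d+2.  Indices of the form Inl _ form the first 2d+1
 coordinates (split as phi, gamma*phi^+, r); indices of the form Inr _ form the last
 d+1 coordinates (split as the leading 1 of w-tilde, then w).  Hence for a D x D matrix,
 entry (Inl _, Inl _) lies in the top-left block, (Inl _, Inr _) in the top-right block,
 (Inr _, Inl _) in the bottom-left block and (Inr _, Inr _) in the bottom-right block.
 Row Inr (Inl ()) is the first row of the bottom blocks; rows Inr (Inr j) are the last d
 rows (the bar-blocks).\<close>

type_synonym 'd idx = "(('d + 'd) + unit) + (unit + 'd)"

type_synonym 'd mat = "real ^ 'd idx ^ 'd idx"

text \<open>A sample z = (phi, w, s, a, r): feature map phi : S x A -> R^d, weight vector w,
 states s_0..s_n, actions a_0..a_n and rewards r_1..r_n (r i is r_i).\<close>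

type_synonym ('s, 'a, 'd) sample =
  "('s \<times> 'a \<Rightarrow> real ^ 'd) \<times> (real ^ 'd) \<times> (nat \<Rightarrow> 's) \<times> (nat \<Rightarrow> 'a) \<times> (nat \<Rightarrow> real)"

definition feat :: "('s, 'a, 'd::finite) sample \<Rightarrow> 's \<times> 'a \<Rightarrow> real ^ 'd" where
  "feat z = fst z"

definition wvec :: "('s, 'a, 'd::finite) sample \<Rightarrow> real ^ 'd" where
  "wvec z = fst (snd z)"

definition state :: "('s, 'a, 'd::finite) sample \<Rightarrow> nat \<Rightarrow> 's" where
  "state z = fst (snd (snd z))"

definition action :: "('s, 'a, 'd::finite) sample \<Rightarrow> nat \<Rightarrow> 'a" where
  "action z = fst (snd (snd (snd z)))"

definition reward :: "('s, 'a, 'd::finite) sample \<Rightarrow> nat \<Rightarrow> real" where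
  "reward z = snd (snd (snd (snd z)))"

definition phi :: "('s, 'a, 'd::finite) sample \<Rightarrow> nat \<Rightarrow> real ^ 'd" where
  "phi z i = feat z (state z i, action z i)"

definition phi_plus :: "('s, 'a, 'd::finite) sample \<Rightarrow> nat \<Rightarrow> real ^ 'd" where
  "phi_plus z i = feat z (state z (Suc i), action z (Suc i))"

definition td_error :: "real \<Rightarrow> ('s, 'a, 'd::finite) sample \<Rightarrow> nat \<Rightarrow> real" where
  "td_error \<gamma> z i = reward z (Suc i) + \<gamma> * (wvec z \<bullet> phi_plus z i) - wvec z \<bullet> phi z i"

definition w_sarsa :: "real \<Rightarrow> real \<Rightarrow> nat \<Rightarrow> ('s, 'a, 'd::finite) sample \<Rightarrow> real ^ 'd" where
  "w_sarsa \<gamma> \<alpha> n z = wvec z + (\<alpha> / real n) *\<^sub>R (\<Sum>i<n. td_error \<gamma> z i *\<^sub>R phi z i)"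

definition xcol :: "real \<Rightarrow> ('s, 'a, 'd::finite) sample \<Rightarrow> nat \<Rightarrow> real ^ 'd idx" where
  "xcol \<gamma> z i = (\<chi> k. case k of
       Inl (Inl (Inl j)) \<Rightarrow> phi z i $ j
     | Inl (Inl (Inr j)) \<Rightarrow> \<gamma> * (phi_plus z i $ j)
     | Inl (Inr u) \<Rightarrow> reward z (Suc i)
     | Inr v \<Rightarrow> 0)"

definition wcol :: "('s, 'a, 'd::finite) sample \<Rightarrow> real ^ 'd idx" where
  "wcol z = (\<chi> k. case k of
       Inl v \<Rightarrow> 0
     | Inr (Inl u) \<Rightarrow> 1
     | Inr (Inr j) \<Rightarrow> wvec z $ j)"

definition prompt :: "real \<Rightarrow> nat \<Rightarrow> ('s, 'a, 'd::finite) sample \<Rightarrow> nat \<Rightarrow> real ^ 'd idx" where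
  "prompt \<gamma> n z k = (if k < n then xcol \<gamma> z k else wcol z)"

text \<open>For a D x (n+1) matrix H given by its columns H 0, ..., H n, the block output
 H + (1/n) (V H)(H^T P H) has column l equal to
 H l + (1/n) sum_{k=0}^{n} (H k . P H l) (V H k).\<close>

definition lsa :: "nat \<Rightarrow> 'd::finite mat \<Rightarrow> 'd mat \<Rightarrow> (nat \<Rightarrow> real ^ 'd idx) \<Rightarrow> nat \<Rightarrow> real ^ 'd idx" where
  "lsa n P V H l = H l + (1 / real n) *\<^sub>R (\<Sum>k\<le>n. (H k \<bullet> (P *v H l)) *\<^sub>R (V *v H k))"

definition TF :: "nat \<Rightarrow> 'd::finite mat \<Rightarrow> 'd mat \<Rightarrow> (nat \<Rightarrow> real ^ 'd idx) \<Rightarrow> real ^ 'd" where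
  "TF n P V H = (\<chi> j. lsa n P V H n $ Inr (Inr j))"

definition pop_loss :: "real \<Rightarrow> real \<Rightarrow> nat \<Rightarrow> ('s, 'a, 'd::finite) sample measure \<Rightarrow> 'd mat \<times> 'd mat \<Rightarrow> real" where
  "pop_loss \<gamma> \<alpha> n M PV =
     (\<integral>z. (1/2) * (norm (TF n (fst PV) (snd PV) (prompt \<gamma> n z) - w_sarsa \<gamma> \<alpha> n z))\<^sup>2 \<partial>M)"

definition has_gradient :: "('v::real_inner \<Rightarrow> real) \<Rightarrow> 'v \<Rightarrow> 'v \<Rightarrow> bool" where
  "has_gradient f g x \<longleftrightarrow> (f has_derivative (\<lambda>h. g \<bullet> h)) (at x)"

definition gradient_flow :: "('v::real_inner \<Rightarrow> real) \<Rightarrow> (real \<Rightarrow> 'v) \<Rightarrow> bool" where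
  "gradient_flow f X \<longleftrightarrow>
     (\<forall>t\<ge>0. \<exists>g. has_gradient f g (X t) \<and> (X has_vector_derivative (- g)) (at t within {0..}))"

text \<open>Entries of P in P11 or P21 (i.e. in the first 2d+1 columns).\<close>
definition P_irrel :: "'d::finite idx \<Rightarrow> 'd idx \<Rightarrow> bool" where
  "P_irrel i j \<longleftrightarrow> isl j"

text \<open>Entries of V in V11, V12, or the first rows of V21, V22 (i.e. every row except the
 last d rows).\<close>
definition V_irrel :: "'d::finite idx \<Rightarrow> 'd idx \<Rightarrow> bool" where
  "V_irrel i j \<longleftrightarrow> (\<forall>k. i \<noteq> Inr (Inr k))"

definition P22_entry :: "'d::finite idx \<Rightarrow> 'd idx \<Rightarrow> bool" where
  "P22_entry i j \<longleftrightarrow> \<not> isl i \<and> \<not> isl j"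

definition V22bar_entry :: "'d::finite idx \<Rightarrow> 'd idx \<Rightarrow> bool" where
  "V22bar_entry i j \<longleftrightarrow> (\<exists>k. i = Inr (Inr k)) \<and> \<not> isl j"

end

theory Submission
  imports Defs
begin

lemma at_within_Icc_loc:
  fixes t a b :: real
  assumes "t < b"
  shows "at t within {a..b} = at t within {a..}"
  unfolding filter_eq_iff eventually_at_topological
proof (intro allI iffI)
  fix P
  assume "\<exists>S. open S \<and> t \<in> S \<and> (\<forall>x\<in>S. x \<noteq> t \<longrightarrow> x \<in> {a..b} \<longrightarrow> P x)"
  then obtain S where S: "open S" "t \<in> S" "\<forall>x\<in>S. x \<noteq> t \<longrightarrow> x \<in> {a..b} \<longrightarrow> P x" by blast
  show "\<exists>S. open S \<and> t \<in> S \<and> (\<forall>x\<in>S. x \<noteq> t \<longrightarrow> x \<in> {a..} \<longrightarrow> P x)"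
    by (rule exI[of _ "S \<inter> {..<b}"]) (use S assms in auto)
next
  fix P
  assume "\<exists>S. open S \<and> t \<in> S \<and> (\<forall>x\<in>S. x \<noteq> t \<longrightarrow> x \<in> {a..} \<longrightarrow> P x)"
  then show "\<exists>S. open S \<and> t \<in> S \<and> (\<forall>x\<in>S. x \<noteq> t \<longrightarrow> x \<in> {a..b} \<longrightarrow> P x)"
    by auto
qed

lemma int_deriv0:
  fixes g :: "real \<Rightarrow> 'a::banach"
  assumes "continuous_on {0..} g" "0 \<le> t"
  shows "((\<lambda>u. integral {0..u} g) has_vector_derivative g t) (at t within {0..})"
proof -
  have "continuous_on {0..t+1} g" using assms(1) by (rule continuous_on_subset) auto
  from integral_has_vector_derivative[OF this, of t] assms(2)
  show ?thesis by (simp add: at_within_Icc_loc)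
qed

lemma contint0:
  fixes g :: "real \<Rightarrow> 'a::banach"
  assumes "continuous_on {0..} g"
  shows "continuous_on {0..} (\<lambda>t. integral {0..t} g)"
  unfolding continuous_on_eq_continuous_within
  using has_vector_derivative_continuous[OF int_deriv0[OF assms]] by auto

lemma cont_loc:
  fixes Y :: "real \<Rightarrow> 'a::real_normed_vector"
  assumes "\<And>T. 0 \<le> T \<Longrightarrow> continuous_on {0..T} Y"
  shows "continuous_on {0..} Y"
  unfolding continuous_on_eq_continuous_within
proof
  fix t :: real assume t: "t \<in> {0..}"
  have "continuous (at t within {0..t+1}) Y"
    using assms[of "t+1"] t unfolding continuous_on_eq_continuous_within by auto
  then show "continuous (at t within {0..}) Y" by (simp add: at_within_Icc_loc)
qed

lemma int_pow:
  fixes t c :: real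
  assumes "0 \<le> t"
  shows "integral {0..t} (\<lambda>s. c * s ^ k) = c * t ^ Suc k / real (Suc k)"
proof -
  have "((\<lambda>s. c * s ^ k) has_integral (c * t ^ Suc k / real (Suc k) - c * 0 ^ Suc k / real (Suc k))) {0..t}"
    apply (rule fundamental_theorem_of_calculus[OF assms])
    apply (rule has_real_derivative_iff_has_vector_derivative[THEN iffD1])
    apply (rule derivative_eq_intros refl | simp)+
    done
  from integral_unique[OF this] show ?thesis by simp
qed

lemma picard:
  fixes F :: "real \<Rightarrow> 'a::euclidean_space \<Rightarrow> 'a"
  assumes cont: "\<And>Y. continuous_on {0..} Y \<Longrightarrow> continuous_on {0..} (\<lambda>s. F s (Y s))"
    and lip: "\<And>T. \<exists>K. \<forall>s x y. 0 \<le> s \<longrightarrow> s \<le> T \<longrightarrow> norm (F s x - F s y) \<le> K * norm (x - y)"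
  shows "\<exists>Y. continuous_on {0..} Y \<and> (\<forall>t\<ge>0. Y t = x0 + integral {0..t} (\<lambda>s. F s (Y s)))"
proof -
  define Yk where "Yk = rec_nat (\<lambda>t. x0) (\<lambda>k Y t. x0 + integral {0..t} (\<lambda>s. F s (Y s)))"
  have Y0: "Yk 0 = (\<lambda>t. x0)" by (simp add: Yk_def)
  have YS: "\<And>k. Yk (Suc k) = (\<lambda>t. x0 + integral {0..t} (\<lambda>s. F s (Yk k s)))" by (simp add: Yk_def)
  have YS': "\<And>k t. Yk (Suc k) t = x0 + integral {0..t} (\<lambda>s. F s (Yk k s))" by (simp add: YS)
  have contY: "continuous_on {0..} (Yk k)" for k
  proof (induction k)
    case 0 then show ?case by (simp add: Y0)
  next
    case (Suc k)
    show ?case unfolding YS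
      by (intro continuous_intros contint0 cont Suc)
  qed
  have contF: "continuous_on {0..} (\<lambda>s. F s (Yk k s))" for k by (rule cont[OF contY])
  have intF: "(\<lambda>s. F s (Yk k s)) integrable_on {0..t}" for k t
    by (rule integrable_continuous_real, rule continuous_on_subset[OF contF]) auto
  define D where "D i t = Yk (Suc i) t - Yk i t" for i t
  have Ysum: "Yk n t = x0 + (\<Sum>i<n. D i t)" for n t
    by (induction n) (auto simp: D_def Y0)
  define Yinf where "Yinf t = x0 + (\<Sum>i. D i t)" for t
  have unif: "uniform_limit {0..T} Yk Yinf sequentially \<and>
    (\<forall>t\<in>{0..T}. summable (\<lambda>i. D i t)) \<and>
    (\<exists>K. \<forall>s x y. 0 \<le> s \<longrightarrow> s \<le> T \<longrightarrow> norm (F s x - F s y) \<le> K * norm (x - y) \<and> K \<ge> 0)"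
    if T: "0 \<le> T" for T
  proof -
    obtain K0 where K0: "\<forall>s x y. 0 \<le> s \<longrightarrow> s \<le> T \<longrightarrow> norm (F s x - F s y) \<le> K0 * norm (x - y)"
      using lip by blast
    define K where "K = \<bar>K0\<bar>"
    have K: "\<And>s x y. 0 \<le> s \<Longrightarrow> s \<le> T \<Longrightarrow> norm (F s x - F s y) \<le> K * norm (x - y)"
      using K0 unfolding K_def by (meson abs_ge_self mult_right_mono norm_ge_zero order_trans)
    have K0le: "0 \<le> K" by (simp add: K_def)
    have "continuous_on {0..T} (D 0)" unfolding D_def
      by (intro continuous_intros continuous_on_subset[OF contY]) auto
    then have "compact (D 0 ` {0..T})" by (intro compact_continuous_image) auto
    then obtain C1 where C1: "\<forall>x\<in>D 0 ` {0..T}. norm x \<le> C1"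
      using compact_imp_bounded bounded_iff by metis
    define C0 where "C0 = max C1 0"
    have C0: "\<And>t. t \<in> {0..T} \<Longrightarrow> norm (D 0 t) \<le> C0" "0 \<le> C0"
      using C1 unfolding C0_def by force+
    have bnd: "\<forall>t\<in>{0..T}. norm (D k t) \<le> C0 * (K * t) ^ k / fact k" for k
    proof (induction k)
      case 0 then show ?case using C0 by simp
    next
      case (Suc k)
      show ?case
      proof
        fix t assume t: "t \<in> {0..T}"
        have "D (Suc k) t = (x0 + integral {0..t} (\<lambda>s. F s (Yk (Suc k) s))) - (x0 + integral {0..t} (\<lambda>s. F s (Yk k s)))"
          unfolding D_def by (rule arg_cong2[where f=minus]; rule YS')
        also have "\<dots> = integral {0..t} (\<lambda>s. F s (Yk (Suc k) s) - F s (Yk k s))"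
          by (simp add: integral_diff[OF intF intF])
        also have "norm \<dots> \<le> integral {0..t} (\<lambda>s. (C0 * K ^ Suc k / fact k) * s ^ k)"
        proof (rule integral_norm_bound_integral)
          show "(\<lambda>s. F s (Yk (Suc k) s) - F s (Yk k s)) integrable_on {0..t}"
            by (intro integrable_diff intF)
          show "(\<lambda>s. (C0 * K ^ Suc k / fact k) * s ^ k) integrable_on {0..t}"
            by (intro integrable_continuous_real continuous_intros)
          fix s assume s: "s \<in> {0..t}"
          have "norm (F s (Yk (Suc k) s) - F s (Yk k s)) \<le> K * norm (D k s)"
            unfolding D_def using K[of s] s t by auto
          also have "\<dots> \<le> K * (C0 * (K * s) ^ k / fact k)"
            using Suc s t K0le by (intro mult_left_mono) auto
          also have "\<dots> = (C0 * K ^ Suc k / fact k) * s ^ k"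
            by (simp add: power_mult_distrib)
          finally show "norm (F s (Yk (Suc k) s) - F s (Yk k s)) \<le> (C0 * K ^ Suc k / fact k) * s ^ k" .
        qed
        also have "\<dots> = C0 * (K * t) ^ Suc k / fact (Suc k)"
          apply (subst int_pow) using t apply simp
          by (simp add: power_mult_distrib field_simps)
        finally show "norm (D (Suc k) t) \<le> C0 * (K * t) ^ Suc k / fact (Suc k)" .
      qed
    qed
    have bndT: "norm (D k t) \<le> C0 * (K * T) ^ k / fact k" if "t \<in> {0..T}" for k t
    proof -
      have "(K * t) ^ k \<le> (K * T) ^ k"
        using that K0le by (intro power_mono mult_left_mono) auto
      then have "C0 * (K * t) ^ k / fact k \<le> C0 * (K * T) ^ k / fact k"
        using C0(2) by (intro divide_right_mono mult_left_mono) auto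
      then show ?thesis using bnd[of k] that by (meson order_trans)
    qed
    have summ: "summable (\<lambda>k. C0 * (K * T) ^ k / fact k)"
      using summable_mult[OF summable_exp[of "K*T"], of C0]
      by (simp add: field_simps)
    have ul: "uniform_limit {0..T} (\<lambda>n t. \<Sum>i<n. D i t) (\<lambda>t. \<Sum>i. D i t) sequentially"
      by (rule Weierstrass_m_test[OF bndT summ])
    have "uniform_limit {0..T} (\<lambda>n t. x0 + (\<Sum>i<n. D i t)) (\<lambda>t. x0 + (\<Sum>i. D i t)) sequentially"
      by (intro uniform_limit_intros ul)
    then have "uniform_limit {0..T} Yk Yinf sequentially"
      unfolding Yinf_def Ysum[abs_def] .
    moreover have "\<forall>t\<in>{0..T}. summable (\<lambda>i. D i t)"
      using summable_comparison_test[OF _ summ] bndT by (metis (no_types, lifting))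
    ultimately show ?thesis using K K0le by blast
  qed
  have continf: "continuous_on {0..} Yinf"
  proof (rule cont_loc)
    fix T :: real assume "0 \<le> T"
    from unif[OF this] have ul: "uniform_limit {0..T} Yk Yinf sequentially" by blast
    have "\<forall>\<^sub>F n in sequentially. continuous_on {0..T} (Yk n)"
      by (intro always_eventually allI continuous_on_subset[OF contY]) auto
    from uniform_limit_theorem[OF this ul] show "continuous_on {0..T} Yinf" by simp
  qed
  have "Yinf t = x0 + integral {0..t} (\<lambda>s. F s (Yinf s))" if t: "0 \<le> t" for t
  proof -
    obtain K where K: "\<And>s x y. 0 \<le> s \<Longrightarrow> s \<le> t \<Longrightarrow> norm (F s x - F s y) \<le> K * norm (x - y)" "0 \<le> K"
      using unif[OF t] by blast
    have ulY: "uniform_limit {0..t} Yk Yinf sequentially" and sm: "summable (\<lambda>i. D i t)"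
      using unif[OF t] t by auto
    have ulF: "uniform_limit {0..t} (\<lambda>n s. F s (Yk n s)) (\<lambda>s. F s (Yinf s)) sequentially"
    proof (rule uniform_limitI)
      fix e :: real assume e: "0 < e"
      have "e / (K + 1) > 0" using e K(2) by simp
      from uniform_limitD[OF ulY this]
      show "\<forall>\<^sub>F n in sequentially. \<forall>s\<in>{0..t}. dist (F s (Yk n s)) (F s (Yinf s)) < e"
      proof (rule eventually_mono)
        fix n assume h: "\<forall>s\<in>{0..t}. dist (Yk n s) (Yinf s) < e / (K + 1)"
        show "\<forall>s\<in>{0..t}. dist (F s (Yk n s)) (F s (Yinf s)) < e"
        proof
          fix s assume s: "s \<in> {0..t}"
          have "dist (F s (Yk n s)) (F s (Yinf s)) \<le> K * dist (Yk n s) (Yinf s)"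
            using K(1)[of s] s by (simp add: dist_norm)
          also have "\<dots> \<le> K * (e / (K+1))"
            using h s K(2) by (intro mult_left_mono) (auto simp: less_imp_le)
          also have "\<dots> < e" using K(2) e by (simp add: field_simps)
          finally show "dist (F s (Yk n s)) (F s (Yinf s)) < e" .
        qed
      qed
    qed
    have cF: "\<And>n. continuous_on {0..t} (\<lambda>s. F s (Yk n s))" by (rule continuous_on_subset[OF contF]) auto
    obtain I J where IJ: "\<And>n. ((\<lambda>s. F s (Yk n s)) has_integral I n) {0..t}"
      "((\<lambda>s. F s (Yinf s)) has_integral J) {0..t}" "I \<longlonglongrightarrow> J"
      using uniform_limit_integral[OF ulF cF sequentially_bot] by blast
    have "(\<lambda>n. Yk (Suc n) t) \<longlonglongrightarrow> x0 + J"
    proof -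
      have "integral {0..t} (\<lambda>s. F s (Yk n s)) = I n" for n using IJ(1) by (rule integral_unique)
      then show ?thesis unfolding YS' using IJ(3) by (simp add: tendsto_add)
    qed
    moreover have "(\<lambda>n. Yk (Suc n) t) \<longlonglongrightarrow> Yinf t"
    proof -
      have "(\<lambda>n. Yk n t) \<longlonglongrightarrow> Yinf t"
        unfolding Ysum Yinf_def by (intro tendsto_add tendsto_const summable_LIMSEQ sm)
      then show ?thesis by (rule LIMSEQ_Suc)
    qed
    ultimately have "Yinf t = x0 + J" using LIMSEQ_unique by blast
    then show ?thesis using IJ(2) by (simp add: integral_unique)
  qed
  with continf show ?thesis by blast
qed

definition locLip :: "('a::real_normed_vector \<Rightarrow> 'b::real_normed_vector) \<Rightarrow> bool" where
  "locLip g \<longleftrightarrow> (\<forall>R. \<exists>K B. 0 \<le> K \<and> (\<forall>x y. norm x \<le> R \<longrightarrow> norm y \<le> R \<longrightarrow>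
      norm (g x) \<le> B \<and> norm (g x - g y) \<le> K * norm (x - y)))"

lemma locLip_cont:
  assumes "locLip g"
  shows "continuous_on UNIV g"
  unfolding continuous_on_eq_continuous_within
proof
  fix x :: 'a
  obtain K B where KB: "0 \<le> K" "\<And>y z. norm y \<le> norm x + 1 \<Longrightarrow> norm z \<le> norm x + 1 \<Longrightarrow>
      norm (g y - g z) \<le> K * norm (y - z)"
    using assms unfolding locLip_def by meson
  show "continuous (at x within UNIV) g"
    unfolding continuous_within_eps_delta
  proof (intro allI impI)
    fix e :: real assume e: "0 < e"
    show "\<exists>d>0. \<forall>y\<in>UNIV. dist y x < d \<longrightarrow> dist (g y) (g x) < e"
    proof (intro exI[of _ "min 1 (e / (K + 1))"] conjI ballI impI)
      show "0 < min 1 (e / (K + 1))" using e KB(1) by simp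
      fix y assume y: "dist y x < min 1 (e / (K + 1))"
      have "norm y \<le> norm x + 1" using y norm_triangle_ineq2[of y x] by (simp add: dist_norm)
      then have "dist (g y) (g x) \<le> K * dist y x" using KB(2)[of y x] by (simp add: dist_norm)
      also have "\<dots> \<le> K * (e / (K + 1))" using y KB(1) by (intro mult_left_mono) auto
      also have "\<dots> < e" using KB(1) e by (simp add: field_simps)
      finally show "dist (g y) (g x) < e" .
    qed
  qed
qed

definition rtr :: "real \<Rightarrow> 'a::real_normed_vector \<Rightarrow> 'a" where
  "rtr \<rho> x = (\<rho> / max \<rho> (norm x)) *\<^sub>R x"

lemma rtr_id: "0 < \<rho> \<Longrightarrow> norm x \<le> \<rho> \<Longrightarrow> rtr \<rho> x = x"
  by (simp add: rtr_def max_def)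

lemma rtr_norm: "0 < \<rho> \<Longrightarrow> norm (rtr \<rho> x) \<le> \<rho>"
  by (auto simp: rtr_def max_def field_simps)

lemma rtr_cp:
  fixes x :: "'a::euclidean_space"
  assumes r: "0 < \<rho>"
  shows "rtr \<rho> x = closest_point (cball 0 \<rho>) x"
proof (rule closest_point_unique)
  show "rtr \<rho> x \<in> cball 0 \<rho>" using rtr_norm[OF r] by simp
  show "\<forall>z\<in>cball 0 \<rho>. dist x (rtr \<rho> x) \<le> dist x z"
  proof
    fix z :: 'a assume z: "z \<in> cball 0 \<rho>"
    show "dist x (rtr \<rho> x) \<le> dist x z"
    proof (cases "norm x \<le> \<rho>")
      case True then show ?thesis by (simp add: rtr_id r)
    next
      case False
      then have nx: "norm x > 0" "x \<noteq> 0" using r by auto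
      have "x - rtr \<rho> x = (1 - \<rho> / norm x) *\<^sub>R x" using False nx by (simp add: rtr_def max_def algebra_simps)
      then have "dist x (rtr \<rho> x) = \<bar>1 - \<rho> / norm x\<bar> * norm x" by (simp add: dist_norm)
      also have "\<dots> = norm x - \<rho>" using False nx by (simp add: field_simps abs_if)
      also have "\<dots> \<le> norm x - norm z" using z by simp
      also have "\<dots> \<le> dist x z" using norm_triangle_ineq2[of x z] by (simp add: dist_norm)
      finally show ?thesis .
    qed
  qed
qed auto

lemma rtr_lip:
  fixes x y :: "'a::euclidean_space"
  assumes "0 < \<rho>"
  shows "norm (rtr \<rho> x - rtr \<rho> y) \<le> norm (x - y)"
  using closest_point_lipschitz[of "cball (0::'a) \<rho>" x y] assms
  by (simp add: rtr_cp dist_norm)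

lemma gflow_exists:
  fixes f :: "'a::euclidean_space \<Rightarrow> real" and G :: "'a \<Rightarrow> 'a"
  assumes nonneg: "\<And>x. 0 \<le> f x" and grad: "\<And>x. has_gradient f (G x) x" and lip: "locLip G"
  shows "\<exists>X. X 0 = x0 \<and> (\<forall>t\<ge>0. (X has_vector_derivative - G (X t)) (at t within {0..}))"
proof -
  define c where "c = norm x0 + f x0 / 2 + 1"
  define \<rho> where "\<rho> s = c + s / 2" for s
  have c0: "1 \<le> c" using nonneg[of x0] by (simp add: c_def)
  have \<rho>pos: "\<And>s. 0 \<le> s \<Longrightarrow> 0 < \<rho> s" using c0 by (simp add: \<rho>_def)
  define F where "F s x = - G (rtr (\<rho> s) x)" for s x
  have contG: "continuous_on UNIV G" by (rule locLip_cont[OF lip])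
  have cont: "continuous_on {0..} (\<lambda>s. F s (Y s))" if Y: "continuous_on {0..} Y" for Y
  proof -
    have "continuous_on {0..} (\<lambda>s. rtr (\<rho> s) (Y s))"
      unfolding rtr_def \<rho>_def using c0
      by (intro continuous_intros Y) (auto simp: max_def split: if_splits)
    then show ?thesis unfolding F_def
      by (intro continuous_intros continuous_on_compose2[OF contG]) auto
  qed
  have lipF: "\<exists>K. \<forall>s x y. 0 \<le> s \<longrightarrow> s \<le> T \<longrightarrow> norm (F s x - F s y) \<le> K * norm (x - y)" for T
  proof -
    obtain K B where KB: "0 \<le> K" "\<And>x y. norm x \<le> \<rho> (max T 0) \<Longrightarrow> norm y \<le> \<rho> (max T 0) \<Longrightarrow>
        norm (G x - G y) \<le> K * norm (x - y)"
      using lip unfolding locLip_def by meson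
    show ?thesis
    proof (intro exI allI impI)
      fix s and x y :: 'a assume s: "0 \<le> s" "s \<le> T"
      have "\<rho> s \<le> \<rho> (max T 0)" using s by (simp add: \<rho>_def)
      then have "norm (rtr (\<rho> s) x) \<le> \<rho> (max T 0)" "norm (rtr (\<rho> s) y) \<le> \<rho> (max T 0)"
        using rtr_norm[OF \<rho>pos[OF s(1)]] by (meson order_trans)+
      then have "norm (F s x - F s y) \<le> K * norm (rtr (\<rho> s) x - rtr (\<rho> s) y)"
        using KB(2) by (simp add: F_def norm_minus_commute)
      also have "\<dots> \<le> K * norm (x - y)" using rtr_lip[OF \<rho>pos[OF s(1)]] KB(1) by (intro mult_left_mono)
      finally show "norm (F s x - F s y) \<le> K * norm (x - y)" .
    qed
  qed
  obtain Y where Yc: "continuous_on {0..} Y" and Yi: "\<And>t. 0 \<le> t \<Longrightarrow> Y t = x0 + integral {0..t} (\<lambda>s. F s (Y s))"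
    using picard[of F x0, OF cont lipF] by blast
  have Y0: "Y 0 = x0" using Yi[of 0] by simp
  have Yd: "(Y has_vector_derivative F t (Y t)) (at t within {0..})" if t: "0 \<le> t" for t
  proof -
    have "((\<lambda>u. x0 + integral {0..u} (\<lambda>s. F s (Y s))) has_vector_derivative F t (Y t)) (at t within {0..})"
      using int_deriv0[OF cont[OF Yc] t] by (intro derivative_eq_intros) auto
    then show ?thesis by (rule has_vector_derivative_transform[rotated 2]) (use t Yi in auto)
  qed
  have fcont: "continuous_on UNIV f"
    using grad unfolding has_gradient_def
    by (meson continuous_at_imp_continuous_on has_derivative_continuous)
  have bound: "norm (Y t) < \<rho> t" if t0: "0 \<le> t" for t
  proof (rule ccontr)
    assume nt: "\<not> norm (Y t) < \<rho> t"
    define A where "A = {0..} \<inter> (\<lambda>t. norm (Y t) - \<rho> t) -` {0..}"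
    have tA: "t \<in> A" using nt t0 by (simp add: A_def)
    have clA: "closed A" unfolding A_def \<rho>_def
      by (intro continuous_closed_preimage continuous_intros Yc) auto
    have bdd: "bdd_below A" unfolding A_def bdd_below_def by auto
    define \<tau> where "\<tau> = Inf A"
    have \<tau>A: "\<tau> \<in> A" unfolding \<tau>_def using closed_contains_Inf[OF _ bdd clA] tA by blast
    have \<tau>0: "0 \<le> \<tau>" using \<tau>A by (simp add: A_def)
    have below: "norm (Y s) < \<rho> s" if "0 \<le> s" "s < \<tau>" for s
    proof (rule ccontr)
      assume "\<not> norm (Y s) < \<rho> s"
      then have "s \<in> A" using that by (simp add: A_def)
      then have "\<tau> \<le> s" unfolding \<tau>_def by (rule cInf_lower[OF _ bdd])
      then show False using that by simp
    qed
    have "\<tau> \<noteq> 0"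
    proof
      assume "\<tau> = 0"
      then have "\<rho> 0 \<le> norm x0" using \<tau>A Y0 by (simp add: A_def)
      then show False using nonneg[of x0] by (simp add: \<rho>_def c_def)
    qed
    then have \<tau>pos: "0 < \<tau>" using \<tau>0 by simp
    define e where "e = sgn (Y \<tau> - x0)"
    have e1: "norm e \<le> 1" by (simp add: e_def norm_sgn)
    have e2: "inner e (Y \<tau> - x0) = norm (Y \<tau> - x0)"
      by (cases "Y \<tau> = x0") (simp_all add: e_def sgn_div_norm inner_commute power2_norm_eq_inner[symmetric] power2_eq_square)
    define h where "h s = inner e (Y s) + (1/2) * f (Y s) - (1/2) * s" for s
    have hc: "continuous_on {0..\<tau>} h"
    proof -
      have Yc': "continuous_on {0..\<tau>} Y" by (rule continuous_on_subset[OF Yc]) auto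
      show ?thesis unfolding h_def
        by (intro continuous_intros Yc' continuous_on_compose2[OF fcont]) auto
    qed
    have hd: "(h has_real_derivative (- inner e (G (Y s)) - inner (G (Y s)) (G (Y s)) / 2 - 1/2)) (at s)"
      if s: "0 < s" "s < \<tau>" for s
    proof -
      have "F s (Y s) = - G (Y s)" unfolding F_def using below[of s] s \<rho>pos[of s] by (simp add: rtr_id)
      moreover have "at s within {0..} = at s" by (rule at_within_interior) (use s in auto)
      ultimately have "(Y has_vector_derivative - G (Y s)) (at s)" using Yd[of s] s by simp
      then have Ydd: "(Y has_derivative (\<lambda>u. u *\<^sub>R (- G (Y s)))) (at s)" by (simp add: has_vector_derivative_def)
      have fd: "(f has_derivative (\<lambda>v. inner (G (Y s)) v)) (at (Y s))"
        using grad unfolding has_gradient_def by blast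
      have d1: "((\<lambda>s. f (Y s)) has_derivative (\<lambda>u. inner (G (Y s)) (u *\<^sub>R - G (Y s)))) (at s)"
        by (rule has_derivative_compose[OF Ydd fd])
      have d2: "((\<lambda>s. inner e (Y s)) has_derivative (\<lambda>u. inner e (u *\<^sub>R - G (Y s)))) (at s)"
        by (rule has_derivative_compose[OF Ydd bounded_linear.has_derivative[OF bounded_linear_inner_right has_derivative_ident]])
      have "(h has_derivative (\<lambda>u. inner e (u *\<^sub>R - G (Y s)) + (1/2) * inner (G (Y s)) (u *\<^sub>R - G (Y s)) - (1/2) * u)) (at s)"
        unfolding h_def by (intro has_derivative_diff has_derivative_add d2 has_derivative_mult_right d1 has_derivative_ident)
      then show ?thesis unfolding has_field_derivative_def
        by (rule has_derivative_eq_rhs) (auto simp: fun_eq_iff algebra_simps)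
    qed
    have "\<And>x. 0 < x \<Longrightarrow> x < \<tau> \<Longrightarrow> h differentiable (at x)"
      using hd real_differentiable_def by blast
    from MVT[OF \<tau>pos hc this] obtain l z where lz: "0 < z" "z < \<tau>" "DERIV h z :> l" "h \<tau> - h 0 = (\<tau> - 0) * l"
      by blast
    define g where "g = G (Y z)"
    have l_eq: "l = - inner e g - inner g g / 2 - 1/2"
      unfolding g_def by (rule DERIV_unique[OF lz(3) hd[OF lz(1,2)]])
    have "inner e (- g) \<le> norm e * norm (- g)" by (rule norm_cauchy_schwarz)
    also have "\<dots> \<le> 1 * norm g" using mult_right_mono[OF e1, of "norm g"] by simp
    finally have ieg: "- inner e g \<le> norm g" by simp
    have igg: "inner g g = (norm g)^2" by (simp add: power2_norm_eq_inner)
    have sq: "0 \<le> (norm g)^2 - 2 * norm g + 1"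
    proof -
      have "0 \<le> (norm g - 1)^2" by simp
      also have "(norm g - 1)^2 = (norm g)^2 - 2 * norm g + 1" by (simp add: power2_eq_square algebra_simps)
      finally show ?thesis .
    qed
    have "l \<le> 0" using l_eq ieg igg sq by linarith
    then have "\<tau> * l \<le> 0" using \<tau>pos by (simp add: mult_nonneg_nonpos)
    then have "h \<tau> \<le> h 0" using lz(4) by simp
    then have "norm (Y \<tau> - x0) \<le> f x0 / 2 + \<tau> / 2 - f (Y \<tau>) / 2"
      using e2 by (simp add: h_def Y0 inner_diff_right)
    then have "norm (Y \<tau> - x0) \<le> f x0 / 2 + \<tau> / 2" using nonneg[of "Y \<tau>"] by simp
    then have "norm (Y \<tau>) < \<rho> \<tau>"
      using norm_triangle_sub[of "Y \<tau>" x0] by (simp add: \<rho>_def c_def)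
    then show False using \<tau>A by (simp add: A_def)
  qed
  show ?thesis
  proof (intro exI conjI allI impI)
    show "Y 0 = x0" by (rule Y0)
    fix t :: real assume t: "0 \<le> t"
    have "F t (Y t) = - G (Y t)" unfolding F_def using bound[OF t] \<rho>pos[OF t] by (simp add: rtr_id)
    then show "(Y has_vector_derivative - G (Y t)) (at t within {0..})" using Yd[OF t] by simp
  qed
qed

lemma locLip_const: "locLip (\<lambda>x. c)"
  unfolding locLip_def by (intro allI exI[of _ 0] exI[of _ "norm c"]) simp

lemma locLip_add:
  fixes f g :: "'a::real_normed_vector \<Rightarrow> 'b::real_normed_vector"
  assumes "locLip f" "locLip g"
  shows "locLip (\<lambda>x. f x + g x)"
  unfolding locLip_def
proof
  fix R
  obtain K1 B1 where 1: "0 \<le> K1" "\<And>x y. norm x \<le> R \<Longrightarrow> norm y \<le> R \<Longrightarrow> norm (f x) \<le> B1 \<and> norm (f x - f y) \<le> K1 * norm (x - y)"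
    using assms(1) unfolding locLip_def by meson
  obtain K2 B2 where 2: "0 \<le> K2" "\<And>x y. norm x \<le> R \<Longrightarrow> norm y \<le> R \<Longrightarrow> norm (g x) \<le> B2 \<and> norm (g x - g y) \<le> K2 * norm (x - y)"
    using assms(2) unfolding locLip_def by meson
  show "\<exists>K B. 0 \<le> K \<and> (\<forall>x y. norm x \<le> R \<longrightarrow> norm y \<le> R \<longrightarrow>
      norm (f x + g x) \<le> B \<and> norm (f x + g x - (f y + g y)) \<le> K * norm (x - y))"
  proof (intro exI conjI allI impI)
    show "0 \<le> K1 + K2" using 1 2 by simp
    fix x y :: 'a assume xy: "norm x \<le> R" "norm y \<le> R"
    show "norm (f x + g x) \<le> B1 + B2"
      using 1(2)[OF xy] 2(2)[OF xy] norm_triangle_ineq[of "f x" "g x"] by linarith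
    have eq: "f x + g x - (f y + g y) = (f x - f y) + (g x - g y)" by simp
    have "norm (f x + g x - (f y + g y)) \<le> norm (f x - f y) + norm (g x - g y)"
      unfolding eq by (rule norm_triangle_ineq)
    then show "norm (f x + g x - (f y + g y)) \<le> (K1 + K2) * norm (x - y)"
      using 1(2)[OF xy] 2(2)[OF xy] by (simp add: distrib_right)
  qed
qed

lemma locLip_scaleR:
  fixes f :: "'a::real_normed_vector \<Rightarrow> real" and g :: "'a \<Rightarrow> 'b::real_normed_vector"
  assumes "locLip f" "locLip g"
  shows "locLip (\<lambda>x. f x *\<^sub>R g x)"
  unfolding locLip_def
proof
  fix R
  obtain K1 B1 where 1: "0 \<le> K1" "\<And>x y. norm x \<le> R \<Longrightarrow> norm y \<le> R \<Longrightarrow> norm (f x) \<le> B1 \<and> norm (f x - f y) \<le> K1 * norm (x - y)"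
    using assms(1) unfolding locLip_def by meson
  obtain K2 B2 where 2: "0 \<le> K2" "\<And>x y. norm x \<le> R \<Longrightarrow> norm y \<le> R \<Longrightarrow> norm (g x) \<le> B2 \<and> norm (g x - g y) \<le> K2 * norm (x - y)"
    using assms(2) unfolding locLip_def by meson
  define C1 where "C1 = max B1 0"
  define C2 where "C2 = max B2 0"
  show "\<exists>K B. 0 \<le> K \<and> (\<forall>x y. norm x \<le> R \<longrightarrow> norm y \<le> R \<longrightarrow>
      norm (f x *\<^sub>R g x) \<le> B \<and> norm (f x *\<^sub>R g x - f y *\<^sub>R g y) \<le> K * norm (x - y))"
  proof (intro exI conjI allI impI)
    show "0 \<le> C1 * K2 + C2 * K1" using 1 2 by (simp add: C1_def C2_def)
    fix x y :: 'a assume xy: "norm x \<le> R" "norm y \<le> R"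
    have fx: "norm (f x) \<le> C1" and gy: "norm (g y) \<le> C2" and gx: "norm (g x) \<le> C2"
      using 1(2)[OF xy] 2(2)[OF xy] 2(2)[OF xy(2) xy(1)] unfolding C1_def C2_def by auto
    have "norm (f x) * norm (g x) \<le> C1 * C2"
      by (rule mult_mono[OF fx gx]) (auto simp: C1_def)
    then show "norm (f x *\<^sub>R g x) \<le> C1 * C2" by simp
    have eq: "f x *\<^sub>R g x - f y *\<^sub>R g y = f x *\<^sub>R (g x - g y) + (f x - f y) *\<^sub>R g y"
      by (simp add: algebra_simps)
    have "norm (f x *\<^sub>R g x - f y *\<^sub>R g y) \<le> norm (f x *\<^sub>R (g x - g y)) + norm ((f x - f y) *\<^sub>R g y)"
      unfolding eq by (rule norm_triangle_ineq)
    also have "\<dots> = norm (f x) * norm (g x - g y) + norm (f x - f y) * norm (g y)"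
      by simp
    also have "\<dots> \<le> C1 * (K2 * norm (x - y)) + (K1 * norm (x - y)) * C2"
    proof (rule add_mono)
      show "norm (f x) * norm (g x - g y) \<le> C1 * (K2 * norm (x - y))"
        by (rule mult_mono[OF fx]) (use 2(2)[OF xy] in \<open>auto simp: C1_def\<close>)
      show "norm (f x - f y) * norm (g y) \<le> (K1 * norm (x - y)) * C2"
        by (rule mult_mono[OF _ gy]) (use 1(2)[OF xy] 1(1) in auto)
    qed
    finally show "norm (f x *\<^sub>R g x - f y *\<^sub>R g y) \<le> (C1 * K2 + C2 * K1) * norm (x - y)"
      by (simp add: algebra_simps)
  qed
qed

lemma locLip_mult:
  fixes f g :: "'a::real_normed_vector \<Rightarrow> real"
  assumes "locLip f" "locLip g"
  shows "locLip (\<lambda>x. f x * g x)"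
  using locLip_scaleR[OF assms] by simp

lemma locLip_inner: "locLip (\<lambda>x::'a::real_inner. inner x e)"
  unfolding locLip_def
proof
  fix R
  have "\<forall>x y::'a. norm x \<le> R \<longrightarrow> norm y \<le> R \<longrightarrow>
      norm (inner x e) \<le> R * norm e \<and> norm (inner x e - inner y e) \<le> norm e * norm (x - y)"
  proof (intro allI impI conjI)
    fix x y :: 'a assume xy: "norm x \<le> R" "norm y \<le> R"
    have "\<bar>inner x e\<bar> \<le> norm x * norm e" by (rule Cauchy_Schwarz_ineq2)
    also have "\<dots> \<le> R * norm e" using xy by (simp add: mult_right_mono)
    finally show "norm (inner x e) \<le> R * norm e" by simp
    have "\<bar>inner (x - y) e\<bar> \<le> norm (x - y) * norm e" by (rule Cauchy_Schwarz_ineq2)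
    then show "norm (inner x e - inner y e) \<le> norm e * norm (x - y)"
      by (simp add: inner_diff_left mult.commute)
  qed
  then show "\<exists>K B. 0 \<le> K \<and> (\<forall>x y::'a. norm x \<le> R \<longrightarrow> norm y \<le> R \<longrightarrow>
      norm (inner x e) \<le> B \<and> norm (inner x e - inner y e) \<le> K * norm (x - y))"
    by (intro exI[of _ "norm e"] exI[of _ "R * norm e"]) simp
qed

definition good :: "('v::real_inner \<Rightarrow> real) \<Rightarrow> bool" where
  "good p \<longleftrightarrow> (\<exists>G. (\<forall>x. has_gradient p (G x) x) \<and> locLip G) \<and> locLip p"

lemma good_const: "good (\<lambda>x::'v::real_inner. c)"
  unfolding good_def has_gradient_def
proof (intro conjI exI[of _ "\<lambda>x. 0"] allI locLip_const)
  fix x :: 'v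
  show "((\<lambda>x. c) has_derivative (\<lambda>h. inner 0 h)) (at x)"
    by (rule has_derivative_eq_rhs[OF has_derivative_const]) auto
qed

lemma good_inner: "good (\<lambda>x::'v::real_inner. inner x e)"
  unfolding good_def has_gradient_def
proof (intro conjI exI[of _ "\<lambda>x. e"] allI locLip_const locLip_inner)
  fix x :: 'v
  have "((\<lambda>x. inner x e) has_derivative (\<lambda>h. inner h e)) (at x)"
    by (auto intro!: derivative_eq_intros)
  then show "((\<lambda>x. inner x e) has_derivative (\<lambda>h. inner e h)) (at x)"
    by (simp add: inner_commute)
qed

lemma good_add: "good (p::'v::real_inner \<Rightarrow> real) \<Longrightarrow> good q \<Longrightarrow> good (\<lambda>x. p x + q x)"
  unfolding good_def has_gradient_def
proof (elim conjE exE, intro conjI exI allI)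
  fix Gp Gq :: "'v \<Rightarrow> 'v"
  assume p: "\<forall>x. (p has_derivative (\<lambda>h. inner (Gp x) h)) (at x)" "locLip Gp" "locLip p"
    and q: "\<forall>x. (q has_derivative (\<lambda>h. inner (Gq x) h)) (at x)" "locLip Gq" "locLip q"
  fix x :: 'v
  show "((\<lambda>x. p x + q x) has_derivative (\<lambda>h. inner (Gp x + Gq x) h)) (at x)"
    using has_derivative_add[OF p(1)[rule_format, of x] q(1)[rule_format, of x]]
    by (simp add: inner_add_left)
next
  fix Gp Gq :: "'v \<Rightarrow> 'v"
  assume "locLip Gp" "locLip Gq"
  then show "locLip (\<lambda>x. Gp x + Gq x)" by (rule locLip_add)
next
  assume "locLip p" "locLip q"
  then show "locLip (\<lambda>x. p x + q x)" by (rule locLip_add)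
qed

lemma good_mult: "good (p::'v::real_inner \<Rightarrow> real) \<Longrightarrow> good q \<Longrightarrow> good (\<lambda>x. p x * q x)"
  unfolding good_def has_gradient_def
proof (elim conjE exE, intro conjI exI allI)
  fix Gp Gq :: "'v \<Rightarrow> 'v"
  assume p: "\<forall>x. (p has_derivative (\<lambda>h. inner (Gp x) h)) (at x)" "locLip Gp" "locLip p"
    and q: "\<forall>x. (q has_derivative (\<lambda>h. inner (Gq x) h)) (at x)" "locLip Gq" "locLip q"
  fix x :: 'v
  show "((\<lambda>x. p x * q x) has_derivative (\<lambda>h. inner (p x *\<^sub>R Gq x + q x *\<^sub>R Gp x) h)) (at x)"
    using has_derivative_mult[OF p(1)[rule_format, of x] q(1)[rule_format, of x]]
    by (simp add: inner_add_left algebra_simps)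
next
  fix Gp Gq :: "'v \<Rightarrow> 'v"
  assume "locLip Gp" "locLip Gq" "locLip p" "locLip q"
  then show "locLip (\<lambda>x. p x *\<^sub>R Gq x + q x *\<^sub>R Gp x)"
    by (intro locLip_add locLip_scaleR)
next
  assume "locLip p" "locLip q"
  then show "locLip (\<lambda>x. p x * q x)" by (rule locLip_mult)
qed

lemma good_sum: "finite I \<Longrightarrow> (\<And>i. i \<in> I \<Longrightarrow> good (f i)) \<Longrightarrow> good (\<lambda>x. \<Sum>i\<in>I. f i x)"
  by (induction I rule: finite_induct) (auto intro: good_add good_const)

lemma good_cong: "good p \<Longrightarrow> (\<And>x. p x = q x) \<Longrightarrow> good q"
proof -
  assume "good p" "\<And>x. p x = q x"
  then have "p = q" by auto
  with \<open>good p\<close> show "good q" by simp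
qed

lemma grad_dir_zero:
  fixes f :: "'v::real_inner \<Rightarrow> real"
  assumes g: "has_gradient f g x" and inv: "\<And>t. f (x + t *\<^sub>R e) = f x"
  shows "inner g e = 0"
proof -
  have d1: "((\<lambda>t::real. x + t *\<^sub>R e) has_derivative (\<lambda>s. s *\<^sub>R e)) (at 0)"
    by (intro derivative_eq_intros) auto
  have d2: "(f has_derivative (\<lambda>h. inner g h)) (at (x + (0::real) *\<^sub>R e))"
    using g by (simp add: has_gradient_def)
  have "((\<lambda>t::real. f (x + t *\<^sub>R e)) has_derivative (\<lambda>s. inner g (s *\<^sub>R e))) (at 0)"
    by (rule has_derivative_compose[OF d1 d2])
  moreover have "((\<lambda>t::real. f (x + t *\<^sub>R e)) has_derivative (\<lambda>s. 0)) (at 0)"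
    unfolding inv by (rule has_derivative_const)
  ultimately have "(\<lambda>s::real. inner g (s *\<^sub>R e)) = (\<lambda>s. 0)" by (rule has_derivative_unique)
  then have "(\<lambda>s::real. inner g (s *\<^sub>R e)) 1 = (\<lambda>s::real. 0) 1" by (rule arg_cong)
  then show ?thesis by simp
qed

lemma grad_comp:
  fixes p :: "'v::euclidean_space \<Rightarrow> real"
  assumes g: "\<And>x. has_gradient p (G x) x" and lG: "locLip G" and lin: "linear \<pi>"
    and sa: "\<And>x y. inner (\<pi> x) y = inner x (\<pi> y)" and nb: "\<And>x. norm (\<pi> x) \<le> norm x"
  shows "has_gradient (\<lambda>x. p (\<pi> x)) (\<pi> (G (\<pi> x))) x" and "locLip (\<lambda>x. \<pi> (G (\<pi> x)))"
proof -
  have "((\<lambda>x. p (\<pi> x)) has_derivative (\<lambda>h. inner (G (\<pi> x)) (\<pi> h))) (at x)"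
    using has_derivative_compose[OF linear_imp_has_derivative[OF lin] g[unfolded has_gradient_def]] .
  then show "has_gradient (\<lambda>x. p (\<pi> x)) (\<pi> (G (\<pi> x))) x"
    unfolding has_gradient_def by (rule has_derivative_eq_rhs) (simp add: sa fun_eq_iff)
  show "locLip (\<lambda>x. \<pi> (G (\<pi> x)))"
    unfolding locLip_def
  proof
    fix R
    obtain K B where KB: "0 \<le> K" "\<And>x y. norm x \<le> R \<Longrightarrow> norm y \<le> R \<Longrightarrow> norm (G x) \<le> B \<and> norm (G x - G y) \<le> K * norm (x - y)"
      using lG unfolding locLip_def by meson
    show "\<exists>K B. 0 \<le> K \<and> (\<forall>x y. norm x \<le> R \<longrightarrow> norm y \<le> R \<longrightarrow>
        norm (\<pi> (G (\<pi> x))) \<le> B \<and> norm (\<pi> (G (\<pi> x)) - \<pi> (G (\<pi> y))) \<le> K * norm (x - y))"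
    proof (intro exI conjI allI impI)
      show "0 \<le> K" by (rule KB(1))
      fix x y :: 'v assume xy: "norm x \<le> R" "norm y \<le> R"
      have pxy: "norm (\<pi> x) \<le> R" "norm (\<pi> y) \<le> R" using nb xy by (meson order_trans)+
      show "norm (\<pi> (G (\<pi> x))) \<le> B" using KB(2)[OF pxy] nb by (meson order_trans)
      have "norm (\<pi> (G (\<pi> x)) - \<pi> (G (\<pi> y))) = norm (\<pi> (G (\<pi> x) - G (\<pi> y)))"
        by (simp add: linear_diff[OF lin])
      also have "\<dots> \<le> norm (G (\<pi> x) - G (\<pi> y))" by (rule nb)
      also have "\<dots> \<le> K * norm (\<pi> x - \<pi> y)" using KB(2)[OF pxy] by simp
      also have "\<dots> = K * norm (\<pi> (x - y))" by (simp add: linear_diff[OF lin])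
      also have "\<dots> \<le> K * norm (x - y)" using nb KB(1) by (simp add: mult_left_mono)
      finally show "norm (\<pi> (G (\<pi> x)) - \<pi> (G (\<pi> y))) \<le> K * norm (x - y)" .
    qed
  qed
qed

lemma meas_vec_nth:
  fixes f :: "'m \<Rightarrow> real ^ 'n"
  assumes "f \<in> borel_measurable M"
  shows "(\<lambda>z. f z $ i) \<in> borel_measurable M"
  by (rule measurable_compose[OF assms borel_measurable_nth])

lemma prod3_sq_le: "((a::real) * b * c)^2 \<le> a^6 + b^6 + c^6"
proof -
  define m where "m = max \<bar>a\<bar> (max \<bar>b\<bar> \<bar>c\<bar>)"
  have "((a::real) * b * c)^2 = (\<bar>a\<bar> * \<bar>b\<bar> * \<bar>c\<bar>)^2" by (simp add: power2_eq_square abs_mult_self_eq algebra_simps)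
  also have "\<dots> \<le> (m * m * m)^2"
    by (intro power_mono mult_mono) (auto simp: m_def)
  also have "\<dots> = m^6" by (simp add: power2_eq_square eval_nat_numeral)
  also have "\<dots> \<le> a^6 + b^6 + c^6"
  proof -
    have e: "\<And>x::real. \<bar>x\<bar>^6 = x^6" by (simp add: power_even_abs)
    have "m = \<bar>a\<bar> \<or> m = \<bar>b\<bar> \<or> m = \<bar>c\<bar>" by (auto simp: m_def max_def)
    moreover have "0 \<le> a^6" "0 \<le> b^6" "0 \<le> c^6" by (simp_all add: zero_le_even_power)
    ultimately show ?thesis using e by auto
  qed
  finally show ?thesis .
qed

definition L6 :: "'m measure \<Rightarrow> ('m \<Rightarrow> real) \<Rightarrow> bool" where
  "L6 M f \<longleftrightarrow> f \<in> borel_measurable M \<and> integrable M (\<lambda>z. (f z)^6)"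

definition L2 :: "'m measure \<Rightarrow> ('m \<Rightarrow> real) \<Rightarrow> bool" where
  "L2 M f \<longleftrightarrow> f \<in> borel_measurable M \<and> integrable M (\<lambda>z. (f z)^2)"

lemma L6_prod3: "L6 M f \<Longrightarrow> L6 M g \<Longrightarrow> L6 M h \<Longrightarrow> L2 M (\<lambda>z. f z * g z * h z)"
  unfolding L6_def L2_def
proof (intro conjI)
  assume a: "f \<in> borel_measurable M \<and> integrable M (\<lambda>z. f z ^ 6)"
    "g \<in> borel_measurable M \<and> integrable M (\<lambda>z. g z ^ 6)"
    "h \<in> borel_measurable M \<and> integrable M (\<lambda>z. h z ^ 6)"
  then have [measurable]: "f \<in> borel_measurable M" "g \<in> borel_measurable M" "h \<in> borel_measurable M" by auto
  show "(\<lambda>z. f z * g z * h z) \<in> borel_measurable M" by measurable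
  show "integrable M (\<lambda>z. (f z * g z * h z)^2)"
  proof (rule Bochner_Integration.integrable_bound[where f="\<lambda>z. f z ^ 6 + g z ^ 6 + h z ^ 6"])
    show "integrable M (\<lambda>z. f z ^ 6 + g z ^ 6 + h z ^ 6)" using a by auto
    show "(\<lambda>z. (f z * g z * h z)^2) \<in> borel_measurable M" by measurable
    show "AE z in M. norm ((f z * g z * h z)^2) \<le> norm (f z ^ 6 + g z ^ 6 + h z ^ 6)"
    proof (intro AE_I2)
      fix z
      have "0 \<le> f z ^ 6 + g z ^ 6 + h z ^ 6" by (simp add: zero_le_even_power)
      then show "norm ((f z * g z * h z)^2) \<le> norm (f z ^ 6 + g z ^ 6 + h z ^ 6)"
        using prod3_sq_le[of "f z" "g z" "h z"] by simp
    qed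
  qed
qed

lemma L2_add: "L2 M f \<Longrightarrow> L2 M g \<Longrightarrow> L2 M (\<lambda>z. f z + g z)"
  unfolding L2_def
proof (intro conjI)
  assume a: "f \<in> borel_measurable M \<and> integrable M (\<lambda>z. f z ^ 2)"
    "g \<in> borel_measurable M \<and> integrable M (\<lambda>z. g z ^ 2)"
  then have [measurable]: "f \<in> borel_measurable M" "g \<in> borel_measurable M" by auto
  show "(\<lambda>z. f z + g z) \<in> borel_measurable M" by measurable
  show "integrable M (\<lambda>z. (f z + g z)^2)"
  proof (rule Bochner_Integration.integrable_bound[where f="\<lambda>z. 2 * f z ^ 2 + 2 * g z ^ 2"])
    show "integrable M (\<lambda>z. 2 * f z ^ 2 + 2 * g z ^ 2)" using a by auto
    show "(\<lambda>z. (f z + g z)^2) \<in> borel_measurable M" by measurable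
    show "AE z in M. norm ((f z + g z)^2) \<le> norm (2 * f z ^ 2 + 2 * g z ^ 2)"
    proof (intro AE_I2)
      fix z
      have "0 \<le> (f z - g z)^2" by simp
      then have "(f z + g z)^2 \<le> 2 * f z ^ 2 + 2 * g z ^ 2" by (simp add: power2_eq_square algebra_simps)
      then show "norm ((f z + g z)^2) \<le> norm (2 * f z ^ 2 + 2 * g z ^ 2)" by simp
    qed
  qed
qed

lemma L2_cmult: "L2 M f \<Longrightarrow> L2 M (\<lambda>z. c * f z)"
  unfolding L2_def by (auto simp: power_mult_distrib)

lemma L2_uminus: "L2 M f \<Longrightarrow> L2 M (\<lambda>z. - f z)"
  using L2_cmult[of M f "-1"] by simp

lemma L2_diff: "L2 M f \<Longrightarrow> L2 M g \<Longrightarrow> L2 M (\<lambda>z. f z - g z)"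
  using L2_add[of M f "\<lambda>z. - g z"] L2_uminus[of M g] by simp

lemma L2_zero: "L2 M (\<lambda>z. 0)"
  unfolding L2_def by simp

lemma L2_sum: "finite I \<Longrightarrow> (\<And>i. i \<in> I \<Longrightarrow> L2 M (f i)) \<Longrightarrow> L2 M (\<lambda>z. \<Sum>i\<in>I. f i z)"
  by (induction I rule: finite_induct) (auto intro: L2_add L2_zero)

lemma L2_mult_int: "L2 M f \<Longrightarrow> L2 M g \<Longrightarrow> integrable M (\<lambda>z. f z * g z)"
  unfolding L2_def
proof -
  assume a: "f \<in> borel_measurable M \<and> integrable M (\<lambda>z. f z ^ 2)"
    "g \<in> borel_measurable M \<and> integrable M (\<lambda>z. g z ^ 2)"
  then have [measurable]: "f \<in> borel_measurable M" "g \<in> borel_measurable M" by auto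
  show "integrable M (\<lambda>z. f z * g z)"
  proof (rule Bochner_Integration.integrable_bound[where f="\<lambda>z. f z ^ 2 + g z ^ 2"])
    show "integrable M (\<lambda>z. f z ^ 2 + g z ^ 2)" using a by auto
    show "(\<lambda>z. f z * g z) \<in> borel_measurable M" by measurable
    show "AE z in M. norm (f z * g z) \<le> norm (f z ^ 2 + g z ^ 2)"
    proof (intro AE_I2)
      fix z
      have "0 \<le> (\<bar>f z\<bar> - \<bar>g z\<bar>)^2" by simp
      then have "2 * (\<bar>f z\<bar> * \<bar>g z\<bar>) \<le> f z ^ 2 + g z ^ 2"
        by (simp add: power2_eq_square algebra_simps)
      moreover have "0 \<le> \<bar>f z\<bar> * \<bar>g z\<bar>" by simp
      ultimately have "\<bar>f z * g z\<bar> \<le> f z ^ 2 + g z ^ 2"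
        unfolding abs_mult by linarith
      then show "norm (f z * g z) \<le> norm (f z ^ 2 + g z ^ 2)" by simp
    qed
  qed
qed

lemma L6_const: "prob_space M \<Longrightarrow> L6 M (\<lambda>z. c)"
  unfolding L6_def by (simp add: finite_measure.integrable_const prob_space.axioms(1))

lemma L6_cmult: "L6 M f \<Longrightarrow> L6 M (\<lambda>z. c * f z)"
  unfolding L6_def by (auto simp: power_mult_distrib)

lemma sum_triple:
  fixes F :: "'a::finite \<times> 'b::finite \<times> 'c::finite \<Rightarrow> real"
  shows "(\<Sum>t\<in>UNIV. F t) = (\<Sum>a\<in>UNIV. \<Sum>b\<in>UNIV. \<Sum>c\<in>UNIV. F (a, b, c))"
  by (simp add: UNIV_Times_UNIV[symmetric] sum.cartesian_product del: UNIV_Times_UNIV)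

lemma sum_triple2:
  fixes F :: "'a::finite \<times> 'b::finite \<times> 'c::finite \<Rightarrow> real"
  shows "(\<Sum>t\<in>UNIV. F t) = (\<Sum>c\<in>UNIV. \<Sum>a\<in>UNIV. \<Sum>b\<in>UNIV. F (a, b, c))"
proof -
  have "(\<Sum>t\<in>UNIV. F t) = (\<Sum>a\<in>UNIV. \<Sum>b\<in>UNIV. \<Sum>c\<in>UNIV. F (a, b, c))" by (rule sum_triple)
  also have "\<dots> = (\<Sum>a\<in>UNIV. \<Sum>c\<in>UNIV. \<Sum>b\<in>UNIV. F (a, b, c))" by (rule sum.cong[OF refl], rule sum.swap)
  also have "\<dots> = (\<Sum>c\<in>UNIV. \<Sum>a\<in>UNIV. \<Sum>b\<in>UNIV. F (a, b, c))" by (rule sum.swap)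
  finally show ?thesis .
qed

lemma rearr:
  fixes h :: "nat \<Rightarrow> 'i::finite \<Rightarrow> real" and p :: "'i \<Rightarrow> 'i \<Rightarrow> real" and g v :: "'i \<Rightarrow> real"
  shows "c0 * (\<Sum>k\<in>K. (\<Sum>a\<in>UNIV. h k a * (\<Sum>b\<in>UNIV. p a b * g b)) * (\<Sum>c\<in>UNIV. v c * h k c)) =
    (\<Sum>t\<in>UNIV. (p (fst t) (fst (snd t)) * v (snd (snd t))) *
        (c0 * (\<Sum>k\<in>K. h k (fst t) * g (fst (snd t)) * h k (snd (snd t)))))"
proof -
  have "(\<Sum>t\<in>UNIV. (p (fst t) (fst (snd t)) * v (snd (snd t))) *
        (c0 * (\<Sum>k\<in>K. h k (fst t) * g (fst (snd t)) * h k (snd (snd t))))) =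
      (\<Sum>c\<in>UNIV. \<Sum>a\<in>UNIV. \<Sum>b\<in>UNIV. (p a b * v c) * (c0 * (\<Sum>k\<in>K. h k a * g b * h k c)))"
    using sum_triple2[of "\<lambda>t. (p (fst t) (fst (snd t)) * v (snd (snd t))) *
        (c0 * (\<Sum>k\<in>K. h k (fst t) * g (fst (snd t)) * h k (snd (snd t))))"] by simp
  also have "\<dots> = (\<Sum>c\<in>UNIV. \<Sum>a\<in>UNIV. \<Sum>b\<in>UNIV. \<Sum>k\<in>K. c0 * (h k a * (p a b * g b) * (v c * h k c)))"
    by (simp add: sum_distrib_left mult_ac)
  also have "\<dots> = (\<Sum>k\<in>K. \<Sum>c\<in>UNIV. \<Sum>a\<in>UNIV. \<Sum>b\<in>UNIV. c0 * (h k a * (p a b * g b) * (v c * h k c)))"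
    by (simp only: sum.swap[where B=K and A=UNIV])
  also have "\<dots> = c0 * (\<Sum>k\<in>K. (\<Sum>a\<in>UNIV. h k a * (\<Sum>b\<in>UNIV. p a b * g b)) * (\<Sum>c\<in>UNIV. v c * h k c))"
    by (simp add: sum_distrib_left sum_distrib_right)
  finally show ?thesis by simp
qed

definition beta :: "real \<Rightarrow> nat \<Rightarrow> ('s, 'a, 'd::finite) sample \<Rightarrow> 'd idx \<times> 'd idx \<times> 'd idx \<Rightarrow> real" where
  "beta \<gamma> n z t = (1 / real n) * (\<Sum>k\<le>n. prompt \<gamma> n z k $ fst t * prompt \<gamma> n z n $ fst (snd t) * prompt \<gamma> n z k $ snd (snd t))"

lemma wcol_jj: "wcol z $ Inr (Inr j) = wvec z $ j"
  by (simp add: wcol_def)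

lemma TF_expand:
  "TF n P V (prompt \<gamma> n z) $ j = wvec z $ j +
     (\<Sum>t\<in>UNIV. (P $ fst t $ fst (snd t) * V $ Inr (Inr j) $ snd (snd t)) * beta \<gamma> n z t)"
proof -
  have "TF n P V (prompt \<gamma> n z) $ j = prompt \<gamma> n z n $ Inr (Inr j) +
      (1 / real n) * (\<Sum>k\<le>n. (prompt \<gamma> n z k \<bullet> (P *v prompt \<gamma> n z n)) * (V *v prompt \<gamma> n z k) $ Inr (Inr j))"
    by (simp add: TF_def lsa_def sum_component)
  also have "prompt \<gamma> n z n $ Inr (Inr j) = wvec z $ j" by (simp add: prompt_def wcol_jj)
  also have "(1 / real n) * (\<Sum>k\<le>n. (prompt \<gamma> n z k \<bullet> (P *v prompt \<gamma> n z n)) * (V *v prompt \<gamma> n z k) $ Inr (Inr j))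
     = (1 / real n) * (\<Sum>k\<le>n. (\<Sum>a\<in>UNIV. prompt \<gamma> n z k $ a * (\<Sum>b\<in>UNIV. P $ a $ b * prompt \<gamma> n z n $ b)) *
          (\<Sum>c\<in>UNIV. V $ Inr (Inr j) $ c * prompt \<gamma> n z k $ c))"
    by (simp add: inner_vec_def matrix_vector_mult_def)
  also have "\<dots> = (\<Sum>t\<in>UNIV. (P $ fst t $ fst (snd t) * V $ Inr (Inr j) $ snd (snd t)) * beta \<gamma> n z t)"
    unfolding beta_def by (rule rearr)
  finally show ?thesis .
qed

locale setting =
  fixes M :: "('s, 'a, 'd::finite) sample measure"
    and n :: nat and \<gamma> \<alpha> :: real
  assumes M: "prob_space M"
    and n: "n \<ge> 1"
    and \<gamma>: "0 \<le> \<gamma>" "\<gamma> < 1"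
    and meas_phi: "\<And>i. i \<le> n \<Longrightarrow> (\<lambda>z. phi z i) \<in> borel_measurable M"
    and meas_r: "\<And>i. 1 \<le> i \<Longrightarrow> i \<le> n \<Longrightarrow> (\<lambda>z. reward z i) \<in> borel_measurable M"
    and meas_w: "wvec \<in> borel_measurable M"
    and mom_phi: "\<And>i. i \<le> n \<Longrightarrow> integrable M (\<lambda>z. norm (phi z i) ^ 6)"
    and mom_r: "\<And>i. 1 \<le> i \<Longrightarrow> i \<le> n \<Longrightarrow> integrable M (\<lambda>z. (reward z i) ^ 6)"
    and mom_w: "integrable M (\<lambda>z. norm (wvec z) ^ 6)"
begin

lemma L6_vec:
  fixes f :: "('s, 'a, 'd) sample \<Rightarrow> real ^ 'k"
  assumes "f \<in> borel_measurable M" "integrable M (\<lambda>z. norm (f z) ^ 6)"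
  shows "L6 M (\<lambda>z. f z $ i)"
  unfolding L6_def
proof
  show "(\<lambda>z. f z $ i) \<in> borel_measurable M" by (rule meas_vec_nth[OF assms(1)])
  show "integrable M (\<lambda>z. (f z $ i) ^ 6)"
  proof (rule Bochner_Integration.integrable_bound[OF assms(2)])
    show "(\<lambda>z. (f z $ i) ^ 6) \<in> borel_measurable M"
      using meas_vec_nth[OF assms(1), of i] by measurable
    show "AE z in M. norm ((f z $ i) ^ 6) \<le> norm (norm (f z) ^ 6)"
    proof (intro AE_I2)
      fix z
      have "\<bar>f z $ i\<bar> ^ 6 \<le> norm (f z) ^ 6" by (intro power_mono component_le_norm_cart) simp
      then show "norm ((f z $ i) ^ 6) \<le> norm (norm (f z) ^ 6)"
        by (simp add: power_even_abs zero_le_even_power)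
    qed
  qed
qed

lemma L6_phi: "i \<le> n \<Longrightarrow> L6 M (\<lambda>z. phi z i $ j)"
  by (rule L6_vec[OF meas_phi mom_phi])

lemma L6_w: "L6 M (\<lambda>z. wvec z $ j)"
  using L6_vec[OF meas_w] mom_w by simp

lemma L6_r: "1 \<le> i \<Longrightarrow> i \<le> n \<Longrightarrow> L6 M (\<lambda>z. reward z i)"
  unfolding L6_def using meas_r mom_r by simp

lemma L6_const': "L6 M (\<lambda>z. c)"
  by (rule L6_const[OF M])

lemma phi_plus_eq: "phi_plus z i = phi z (Suc i)"
  by (simp add: phi_plus_def phi_def)

lemma L6_prompt:
  assumes "k \<le> n"
  shows "L6 M (\<lambda>z. prompt \<gamma> n z k $ a)"
proof (cases "k < n")
  case True
  then have k1: "Suc k \<le> n" "k \<le> n" "1 \<le> Suc k" by auto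
  show ?thesis
  proof (cases a)
    case (Inl a1)
    then show ?thesis
    proof (cases a1)
      case (Inl a2)
      then show ?thesis
      proof (cases a2)
        case (Inl j)
        then show ?thesis using True \<open>a = Inl a1\<close> \<open>a1 = Inl a2\<close> L6_phi[OF k1(2), of j]
          by (simp add: prompt_def xcol_def)
      next
        case (Inr j)
        then show ?thesis using True \<open>a = Inl a1\<close> \<open>a1 = Inl a2\<close> L6_cmult[OF L6_phi[OF k1(1), of j], where c=\<gamma>]
          by (simp add: prompt_def xcol_def phi_plus_eq)
      qed
    next
      case (Inr u)
      then show ?thesis using True \<open>a = Inl a1\<close> L6_r[OF k1(3) k1(1)]
        by (simp add: prompt_def xcol_def)
    qed
  next
    case (Inr v)
    then show ?thesis using True L6_const'[of 0] by (simp add: prompt_def xcol_def)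
  qed
next
  case False
  show ?thesis
  proof (cases a)
    case (Inl a1)
    then show ?thesis using False L6_const'[of 0] by (simp add: prompt_def wcol_def)
  next
    case (Inr a1)
    then show ?thesis
    proof (cases a1)
      case (Inl u)
      then show ?thesis using False \<open>a = Inr a1\<close> L6_const'[of 1] by (simp add: prompt_def wcol_def)
    next
      case (Inr j)
      then show ?thesis using False \<open>a = Inr a1\<close> L6_w[of j] by (simp add: prompt_def wcol_def)
    qed
  qed
qed

definition uu :: "('s, 'a, 'd) sample \<Rightarrow> 'd \<Rightarrow> real" where
  "uu z j = wvec z $ j - w_sarsa \<gamma> \<alpha> n z $ j"

lemma uu_expand: "uu z j = - (\<alpha> / real n) * (\<Sum>i<n.
    reward z (Suc i) * phi z i $ j * 1
  + \<gamma> * (\<Sum>l\<in>UNIV. wvec z $ l * phi z (Suc i) $ l * phi z i $ j)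
  - (\<Sum>l\<in>UNIV. wvec z $ l * phi z i $ l * phi z i $ j))"
proof -
  have a: "w_sarsa \<gamma> \<alpha> n z $ j = wvec z $ j + (\<alpha> / real n) * (\<Sum>i<n. td_error \<gamma> z i * phi z i $ j)"
    by (simp add: w_sarsa_def sum_component)
  have b: "td_error \<gamma> z i * phi z i $ j = reward z (Suc i) * phi z i $ j * 1
  + \<gamma> * (\<Sum>l\<in>UNIV. wvec z $ l * phi z (Suc i) $ l * phi z i $ j)
  - (\<Sum>l\<in>UNIV. wvec z $ l * phi z i $ l * phi z i $ j)" for i
    by (simp add: td_error_def inner_vec_def phi_plus_eq sum_distrib_right sum_distrib_left algebra_simps)
  show ?thesis unfolding uu_def a b[symmetric] by simp
qed

lemma L2_uu: "L2 M (\<lambda>z. uu z j)"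
  unfolding uu_expand
  by (intro L2_cmult L2_sum L2_add L2_diff L6_prod3 L6_phi L6_r L6_w L6_const' L6_cmult) auto

lemma L2_beta: "L2 M (\<lambda>z. beta \<gamma> n z t)"
  unfolding beta_def
  by (intro L2_cmult L2_sum L6_prod3 L6_prompt) auto

end

definition qq :: "'d::finite \<Rightarrow> 'd idx \<times> 'd idx \<times> 'd idx \<Rightarrow> 'd mat \<times> 'd mat \<Rightarrow> real" where
  "qq j t x = fst x $ fst t $ fst (snd t) * snd x $ Inr (Inr j) $ snd (snd t)"

context setting begin

lemma integrand_expand:
  "(1/2) * (norm (TF n (fst x) (snd x) (prompt \<gamma> n z) - w_sarsa \<gamma> \<alpha> n z))\<^sup>2 =
   (\<Sum>j\<in>UNIV. (1/2) * (uu z j * uu z j) + (\<Sum>t\<in>UNIV. qq j t x * (uu z j * beta \<gamma> n z t))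
      + (\<Sum>t\<in>UNIV. \<Sum>t'\<in>UNIV. ((1/2) * (qq j t x * qq j t' x)) * (beta \<gamma> n z t * beta \<gamma> n z t')))"
proof -
  define v where "v = TF n (fst x) (snd x) (prompt \<gamma> n z) - w_sarsa \<gamma> \<alpha> n z"
  define S where "S j = (\<Sum>t\<in>UNIV. qq j t x * beta \<gamma> n z t)" for j
  have vj: "v $ j = uu z j + S j" for j
    by (simp add: v_def TF_expand uu_def S_def qq_def)
  have n2: "(norm v)\<^sup>2 = (\<Sum>j\<in>UNIV. v $ j * v $ j)"
    by (simp add: power2_norm_eq_inner inner_vec_def)
  have e1: "uu z j * S j = (\<Sum>t\<in>UNIV. qq j t x * (uu z j * beta \<gamma> n z t))" for j
    by (simp add: S_def sum_distrib_left mult_ac)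
  have e2: "(1/2) * (S j * S j) = (\<Sum>t\<in>UNIV. \<Sum>t'\<in>UNIV. ((1/2) * (qq j t x * qq j t' x)) * (beta \<gamma> n z t * beta \<gamma> n z t'))" for j
    by (simp add: S_def sum_product sum_distrib_left mult_ac)
  have pj: "(1/2) * (v $ j * v $ j) = (1/2) * (uu z j * uu z j) + uu z j * S j + (1/2) * (S j * S j)" for j
    by (simp add: vj algebra_simps)
  have "(1/2) * (norm v)\<^sup>2 = (\<Sum>j\<in>UNIV. (1/2) * (v $ j * v $ j))"
    by (simp add: n2 sum_distrib_left)
  also have "\<dots> = (\<Sum>j\<in>UNIV. (1/2) * (uu z j * uu z j) + (\<Sum>t\<in>UNIV. qq j t x * (uu z j * beta \<gamma> n z t))
      + (\<Sum>t\<in>UNIV. \<Sum>t'\<in>UNIV. ((1/2) * (qq j t x * qq j t' x)) * (beta \<gamma> n z t * beta \<gamma> n z t')))"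
    by (rule sum.cong[OF refl]) (simp only: pj e1 e2)
  finally show ?thesis unfolding v_def .
qed

definition polyL :: "'d mat \<times> 'd mat \<Rightarrow> real" where
  "polyL x = (\<Sum>j\<in>UNIV. (1/2) * (\<integral>z. uu z j * uu z j \<partial>M)
     + (\<Sum>t\<in>UNIV. qq j t x * (\<integral>z. uu z j * beta \<gamma> n z t \<partial>M))
     + (\<Sum>t\<in>UNIV. \<Sum>t'\<in>UNIV. ((1/2) * (qq j t x * qq j t' x)) * (\<integral>z. beta \<gamma> n z t * beta \<gamma> n z t' \<partial>M)))"

lemma pop_loss_poly: "pop_loss \<gamma> \<alpha> n M x = polyL x"
proof -
  have I1: "integrable M (\<lambda>z. uu z j * uu z j)" for j by (intro L2_mult_int L2_uu)
  have I2: "integrable M (\<lambda>z. uu z j * beta \<gamma> n z t)" for j t by (intro L2_mult_int L2_uu L2_beta)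
  have I3: "integrable M (\<lambda>z. beta \<gamma> n z t * beta \<gamma> n z t')" for t t' by (intro L2_mult_int L2_beta)
  show ?thesis
    unfolding pop_loss_def integrand_expand polyL_def
    by (simp add: I1 I2 I3 integral_sum integrable_sum integral_add integrable_mult_right)
qed

lemma pop_loss_nonneg: "0 \<le> pop_loss \<gamma> \<alpha> n M x"
  unfolding pop_loss_def by simp

end

definition um :: "'d::finite idx \<Rightarrow> 'd idx \<Rightarrow> 'd mat" where
  "um i j = (\<chi> a b. if a = i \<and> b = j then 1 else 0)"

lemma inner_um: "inner (A::'d::finite mat) (um i j) = A $ i $ j"
proof -
  have "inner A (um i j) = (\<Sum>a\<in>UNIV. \<Sum>b\<in>UNIV. A $ a $ b * (if a = i \<and> b = j then 1 else 0))"
    by (simp add: inner_vec_def um_def)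
  also have "\<dots> = (\<Sum>a\<in>UNIV. if a = i then A $ a $ j else 0)"
    by (rule sum.cong[OF refl]) (auto simp: if_distrib sum.delta' cong: if_cong)
  also have "\<dots> = A $ i $ j" by simp
  finally show ?thesis .
qed

lemma coordP: "fst x $ i $ j = inner x (um i j, 0)"
  by (simp add: inner_prod_def inner_um)

lemma coordV: "snd x $ i $ j = inner x (0, um i j)"
  by (simp add: inner_prod_def inner_um)

lemma um_nth: "um i j $ a $ b = (if a = i \<and> b = j then 1 else 0)"
  by (simp add: um_def)

definition proj :: "'d::finite mat \<times> 'd mat \<Rightarrow> 'd mat \<times> 'd mat" where
  "proj x = ((\<chi> i j. if P22_entry i j then 0 else fst x $ i $ j),
             (\<chi> i j. if V22bar_entry i j then 0 else snd x $ i $ j))"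

lemma proj_linear: "linear proj"
  by (rule linearI) (auto simp: proj_def vec_eq_iff)

lemma ifz1: "(if P then 0 else a) * (b::real) = (if P then 0 else a * b)" by simp
lemma ifz2: "a * (if P then 0 else b) = (if P then 0 else a * (b::real))" by simp

lemma proj_sa: "inner (proj x) y = inner x (proj y)"
  by (simp add: proj_def inner_prod_def inner_vec_def ifz1 ifz2)

lemma proj_norm: "norm (proj x) \<le> norm x"
proof -
  have "inner (proj x) (proj x) \<le> inner x x"
    unfolding proj_def inner_prod_def inner_vec_def
    by (intro add_mono sum_mono) (auto simp: if_distrib)
  then show ?thesis by (simp add: norm_le)
qed

lemma proj_id:
  assumes "\<forall>i j. P22_entry i j \<longrightarrow> fst x $ i $ j = 0" "\<forall>i j. V22bar_entry i j \<longrightarrow> snd x $ i $ j = 0"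
  shows "proj x = x"
  using assms by (auto simp: proj_def vec_eq_iff prod_eq_iff)

lemma proj_umP: "P22_entry i j \<Longrightarrow> proj (um i j, 0) = 0"
  by (auto simp: proj_def vec_eq_iff um_nth P22_entry_def zero_prod_def)

lemma proj_umV: "V22bar_entry i j \<Longrightarrow> proj (0, um i j) = 0"
  by (auto simp: proj_def vec_eq_iff um_nth V22bar_entry_def zero_prod_def)

lemma prompt_lt_inr: "k < n \<Longrightarrow> \<not> isl a \<Longrightarrow> prompt \<gamma> n z k $ a = 0"
  by (cases a) (auto simp: prompt_def xcol_def)

lemma prompt_n_isl: "isl a \<Longrightarrow> prompt \<gamma> n z n $ a = 0"
  by (cases a) (auto simp: prompt_def wcol_def)

lemma beta_b: "isl (fst (snd t)) \<Longrightarrow> beta \<gamma> n z t = 0"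
  unfolding beta_def by (simp add: prompt_n_isl)

lemma beta_ac:
  assumes "\<not> isl (fst t)" "isl (snd (snd t))"
  shows "beta \<gamma> n z t = 0"
proof -
  have zk: "prompt \<gamma> n z k $ fst t * prompt \<gamma> n z n $ fst (snd t) * prompt \<gamma> n z k $ snd (snd t) = 0"
    if "k \<in> {..n}" for k
  proof (cases "k < n")
    case True then show ?thesis using assms by (simp add: prompt_lt_inr)
  next
    case False then have "k = n" using that by simp
    then show ?thesis using assms by (simp add: prompt_n_isl)
  qed
  have S: "(\<Sum>k\<in>{..n}. prompt \<gamma> n z k $ fst t * prompt \<gamma> n z n $ fst (snd t) * prompt \<gamma> n z k $ snd (snd t)) = 0"
    by (rule sum.neutral) (use zk in blast)
  show ?thesis unfolding beta_def S by simp
qed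

lemma beta_c:
  assumes "\<not> isl (snd (snd t))" "isl (fst t) \<or> isl (fst (snd t))"
  shows "beta \<gamma> n z t = 0"
proof -
  have zk: "prompt \<gamma> n z k $ fst t * prompt \<gamma> n z n $ fst (snd t) * prompt \<gamma> n z k $ snd (snd t) = 0"
    if "k \<in> {..n}" for k
  proof (cases "k < n")
    case True then show ?thesis using assms by (simp add: prompt_lt_inr)
  next
    case False then have "k = n" using that by simp
    then show ?thesis using assms by (auto simp: prompt_n_isl)
  qed
  have S: "(\<Sum>k\<in>{..n}. prompt \<gamma> n z k $ fst t * prompt \<gamma> n z n $ fst (snd t) * prompt \<gamma> n z k $ snd (snd t)) = 0"
    by (rule sum.neutral) (use zk in blast)
  show ?thesis unfolding beta_def S by simp
qed

lemma TF_T1: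
  assumes "\<forall>i j. \<not> P_irrel i j \<longrightarrow> P $ i $ j = P' $ i $ j" "\<forall>i j. \<not> V_irrel i j \<longrightarrow> V $ i $ j = V' $ i $ j"
  shows "TF n P V (prompt \<gamma> n z) = TF n P' V' (prompt \<gamma> n z)"
proof -
  have "TF n P V (prompt \<gamma> n z) $ j = TF n P' V' (prompt \<gamma> n z) $ j" for j
    unfolding TF_expand
  proof (intro arg_cong2[where f="(+)"] refl sum.cong)
    fix t :: "'a idx \<times> 'a idx \<times> 'a idx"
    show "P $ fst t $ fst (snd t) * V $ Inr (Inr j) $ snd (snd t) * beta \<gamma> n z t =
          P' $ fst t $ fst (snd t) * V' $ Inr (Inr j) $ snd (snd t) * beta \<gamma> n z t"
    proof (cases "isl (fst (snd t))")
      case True then show ?thesis by (simp add: beta_b)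
    next
      case False then show ?thesis using assms by (simp add: P_irrel_def V_irrel_def)
    qed
  qed
  then show ?thesis by (simp add: vec_eq_iff)
qed

lemma TF_T2:
  assumes "\<forall>i j. V22bar_entry i j \<longrightarrow> V $ i $ j = 0" "\<forall>i j. \<not> P22_entry i j \<longrightarrow> P $ i $ j = P' $ i $ j"
  shows "TF n P V (prompt \<gamma> n z) = TF n P' V (prompt \<gamma> n z)"
proof -
  have "TF n P V (prompt \<gamma> n z) $ j = TF n P' V (prompt \<gamma> n z) $ j" for j
    unfolding TF_expand
  proof (intro arg_cong2[where f="(+)"] refl sum.cong)
    fix t :: "'a idx \<times> 'a idx \<times> 'a idx"
    show "P $ fst t $ fst (snd t) * V $ Inr (Inr j) $ snd (snd t) * beta \<gamma> n z t =
          P' $ fst t $ fst (snd t) * V $ Inr (Inr j) $ snd (snd t) * beta \<gamma> n z t"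
    proof (cases "isl (fst (snd t))")
      case True then show ?thesis by (simp add: beta_b)
    next
      case b: False
      show ?thesis
      proof (cases "isl (fst t)")
        case True then show ?thesis using assms b by (simp add: P22_entry_def)
      next
        case a: False
        show ?thesis
        proof (cases "isl (snd (snd t))")
          case True then show ?thesis using a by (simp add: beta_ac)
        next
          case False then show ?thesis using assms by (simp add: V22bar_entry_def)
        qed
      qed
    qed
  qed
  then show ?thesis by (simp add: vec_eq_iff)
qed

lemma TF_T3:
  assumes "\<forall>i j. P22_entry i j \<longrightarrow> P $ i $ j = 0" "\<forall>i j. \<not> V22bar_entry i j \<longrightarrow> V $ i $ j = V' $ i $ j"
  shows "TF n P V (prompt \<gamma> n z) = TF n P V' (prompt \<gamma> n z)"
proof -
  have "TF n P V (prompt \<gamma> n z) $ j = TF n P V' (prompt \<gamma> n z) $ j" for j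
    unfolding TF_expand
  proof (intro arg_cong2[where f="(+)"] refl sum.cong)
    fix t :: "'a idx \<times> 'a idx \<times> 'a idx"
    show "P $ fst t $ fst (snd t) * V $ Inr (Inr j) $ snd (snd t) * beta \<gamma> n z t =
          P $ fst t $ fst (snd t) * V' $ Inr (Inr j) $ snd (snd t) * beta \<gamma> n z t"
    proof (cases "isl (snd (snd t))")
      case True then show ?thesis using assms by (simp add: V22bar_entry_def)
    next
      case c: False
      show ?thesis
      proof (cases "isl (fst t) \<or> isl (fst (snd t))")
        case True then show ?thesis using c by (simp add: beta_c)
      next
        case False then show ?thesis using assms by (simp add: P22_entry_def)
      qed
    qed
  qed
  then show ?thesis by (simp add: vec_eq_iff)
qed

lemma loss_eq:
  fixes M :: "('s, 'a, 'd::finite) sample measure"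
  assumes "\<And>z::('s, 'a, 'd) sample. TF n (fst x) (snd x) (prompt \<gamma> n z) = TF n (fst y) (snd y) (prompt \<gamma> n z)"
  shows "pop_loss \<gamma> \<alpha> n M x = pop_loss \<gamma> \<alpha> n M y"
  unfolding pop_loss_def by (simp only: assms)

lemma deriv_coord_const:
  fixes X :: "real \<Rightarrow> 'v::real_inner"
  assumes d: "\<And>t. 0 \<le> t \<Longrightarrow> (X has_vector_derivative v t) (at t within {0..})"
    and z: "\<And>t. 0 \<le> t \<Longrightarrow> inner (v t) e = 0"
    and t: "0 \<le> t"
  shows "inner (X t) e = inner (X 0) e"
proof -
  have "((\<lambda>s. inner (X s) e) has_derivative (\<lambda>h. 0)) (at s within {0..})" if s: "s \<in> {0..}" for s
  proof -
    have "(X has_derivative (\<lambda>h. h *\<^sub>R v s)) (at s within {0..})"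
      using d[of s] s by (simp add: has_vector_derivative_def)
    from bounded_linear.has_derivative[OF bounded_linear_inner_left this]
    have "((\<lambda>s. inner (X s) e) has_derivative (\<lambda>h. inner (h *\<^sub>R v s) e)) (at s within {0..})" .
    then show ?thesis by (rule has_derivative_eq_rhs) (use z[of s] s in auto)
  qed
  from has_derivative_zero_unique[OF convex_real_interval(1) this, of t 0] t
  show ?thesis by simp
qed


context setting begin

lemma good_qq: "good (qq (j::'d) t)"
proof (rule good_cong[OF good_mult[OF good_inner good_inner]])
  fix x :: "'d mat \<times> 'd mat"
  show "inner x (um (fst t) (fst (snd t)), 0) * inner x (0, um (Inr (Inr j)) (snd (snd t))) = qq j t x"
    by (simp add: qq_def coordP coordV)
qed

lemma good_L: "good (pop_loss \<gamma> \<alpha> n M)"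
proof -
  have "good polyL" unfolding polyL_def
    by (intro good_sum good_add good_mult good_const good_qq) simp_all
  then show ?thesis by (rule good_cong) (simp add: pop_loss_poly)
qed

lemma irrel_zero:
  assumes g: "has_gradient (pop_loss \<gamma> \<alpha> n M) g x"
  shows "(\<forall>i j. P_irrel i j \<longrightarrow> fst g $ i $ j = 0) \<and> (\<forall>i j. V_irrel i j \<longrightarrow> snd g $ i $ j = 0)"
proof (intro conjI allI impI)
  fix i j :: "'d idx" assume ij: "P_irrel i j"
  have "inner g (um i j, 0) = 0"
  proof (rule grad_dir_zero[OF g])
    fix t :: real
    show "pop_loss \<gamma> \<alpha> n M (x + t *\<^sub>R (um i j, 0)) = pop_loss \<gamma> \<alpha> n M x"
      by (rule loss_eq, rule TF_T1) (use ij in \<open>auto simp: um_nth P_irrel_def\<close>)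
  qed
  then show "fst g $ i $ j = 0" by (simp add: coordP)
next
  fix i j :: "'d idx" assume ij: "V_irrel i j"
  have "inner g (0, um i j) = 0"
  proof (rule grad_dir_zero[OF g])
    fix t :: real
    show "pop_loss \<gamma> \<alpha> n M (x + t *\<^sub>R (0, um i j)) = pop_loss \<gamma> \<alpha> n M x"
      by (rule loss_eq, rule TF_T1) (use ij in \<open>auto simp: um_nth V_irrel_def\<close>)
  qed
  then show "snd g $ i $ j = 0" by (simp add: coordV)
qed

lemma S_zero:
  assumes g: "has_gradient (pop_loss \<gamma> \<alpha> n M) g x"
    and sP: "\<forall>i j. P22_entry i j \<longrightarrow> fst x $ i $ j = 0"
    and sV: "\<forall>i j. V22bar_entry i j \<longrightarrow> snd x $ i $ j = 0"
  shows "(\<forall>i j. P22_entry i j \<longrightarrow> fst g $ i $ j = 0) \<and> (\<forall>i j. V22bar_entry i j \<longrightarrow> snd g $ i $ j = 0)"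
proof (intro conjI allI impI)
  fix i j :: "'d idx" assume ij: "P22_entry i j"
  have "inner g (um i j, 0) = 0"
  proof (rule grad_dir_zero[OF g])
    fix t :: real
    have e: "snd (x + t *\<^sub>R (um i j, 0)) = snd x" by simp
    have "TF n (fst (x + t *\<^sub>R (um i j, 0))) (snd x) (prompt \<gamma> n z) = TF n (fst x) (snd x) (prompt \<gamma> n z)" for z
      by (rule TF_T2[OF sV]) (use ij in \<open>auto simp: um_nth\<close>)
    then show "pop_loss \<gamma> \<alpha> n M (x + t *\<^sub>R (um i j, 0)) = pop_loss \<gamma> \<alpha> n M x"
      by (intro loss_eq) (simp only: e)
  qed
  then show "fst g $ i $ j = 0" by (simp add: coordP)
next
  fix i j :: "'d idx" assume ij: "V22bar_entry i j"
  have "inner g (0, um i j) = 0"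
  proof (rule grad_dir_zero[OF g])
    fix t :: real
    have e: "fst (x + t *\<^sub>R (0, um i j)) = fst x" by simp
    have "TF n (fst x) (snd (x + t *\<^sub>R (0, um i j))) (prompt \<gamma> n z) = TF n (fst x) (snd x) (prompt \<gamma> n z)" for z
      by (rule TF_T3[OF sP]) (use ij in \<open>auto simp: um_nth\<close>)
    then show "pop_loss \<gamma> \<alpha> n M (x + t *\<^sub>R (0, um i j)) = pop_loss \<gamma> \<alpha> n M x"
      by (intro loss_eq) (simp only: e)
  qed
  then show "snd g $ i $ j = 0" by (simp add: coordV)
qed

end

theorem proposition1:
  fixes M :: "('s, 'a, 'd::finite) sample measure"
    and n :: nat and \<gamma> \<alpha> :: real
  assumes M: "prob_space M"
    and n: "n \<ge> 1"
    and \<gamma>: "0 \<le> \<gamma>" "\<gamma> < 1"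
    and \<alpha>: "\<alpha> > 0"
    and meas_phi: "\<And>i. i \<le> n \<Longrightarrow> (\<lambda>z. phi z i) \<in> borel_measurable M"
    and meas_r: "\<And>i. 1 \<le> i \<Longrightarrow> i \<le> n \<Longrightarrow> (\<lambda>z. reward z i) \<in> borel_measurable M"
    and meas_w: "wvec \<in> borel_measurable M"
    and mom_phi: "\<And>i. i \<le> n \<Longrightarrow> integrable M (\<lambda>z. norm (phi z i) ^ 6)"
    and mom_r: "\<And>i. 1 \<le> i \<Longrightarrow> i \<le> n \<Longrightarrow> integrable M (\<lambda>z. (reward z i) ^ 6)"
    and mom_w: "integrable M (\<lambda>z. norm (wvec z) ^ 6)"
  shows
    \<comment> \<open>(i) the blocks P11, P21, V11, V12 and first rows of V21, V22 do not affect TF\<close>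
    "(\<forall>(z::('s, 'a, 'd) sample) (P::'d mat) (V::'d mat) P' V'.
        (\<forall>i j. \<not> P_irrel i j \<longrightarrow> P $ i $ j = P' $ i $ j) \<and>
        (\<forall>i j. \<not> V_irrel i j \<longrightarrow> V $ i $ j = V' $ i $ j) \<longrightarrow>
        TF n P V (prompt \<gamma> n z) = TF n P' V' (prompt \<gamma> n z))
     \<comment> \<open>(i) the gradient of L w.r.t. these blocks is zero\<close>
   \<and> (\<forall>P V. \<exists>g. has_gradient (pop_loss \<gamma> \<alpha> n M) g (P, V) \<and>
        (\<forall>i j. P_irrel i j \<longrightarrow> fst g $ i $ j = 0) \<and>
        (\<forall>i j. V_irrel i j \<longrightarrow> snd g $ i $ j = 0))
     \<comment> \<open>(i) hence these blocks stay unchanged along the gradient flow\<close>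
   \<and> (\<forall>X. gradient_flow (pop_loss \<gamma> \<alpha> n M) X \<longrightarrow>
        (\<forall>t\<ge>0. \<forall>i j.
           (P_irrel i j \<longrightarrow> fst (X t) $ i $ j = fst (X 0) $ i $ j) \<and>
           (V_irrel i j \<longrightarrow> snd (X t) $ i $ j = snd (X 0) $ i $ j)))
     \<comment> \<open>(ii) gradients w.r.t. P22 and bar-V22 vanish when P22 = 0 and bar-V22 = 0\<close>
   \<and> (\<forall>P V.
        (\<forall>i j. P22_entry i j \<longrightarrow> P $ i $ j = 0) \<and>
        (\<forall>i j. V22bar_entry i j \<longrightarrow> V $ i $ j = 0) \<longrightarrow>
        (\<exists>g. has_gradient (pop_loss \<gamma> \<alpha> n M) g (P, V) \<and>
           (\<forall>i j. P22_entry i j \<longrightarrow> fst g $ i $ j = 0) \<and>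
           (\<forall>i j. V22bar_entry i j \<longrightarrow> snd g $ i $ j = 0)))
     \<comment> \<open>(ii) hence from such an initialisation the flow admits a solution keeping them 0\<close>
   \<and> (\<forall>P0 V0.
        (\<forall>i j. P22_entry i j \<longrightarrow> P0 $ i $ j = 0) \<and>
        (\<forall>i j. V22bar_entry i j \<longrightarrow> V0 $ i $ j = 0) \<longrightarrow>
        (\<exists>X. gradient_flow (pop_loss \<gamma> \<alpha> n M) X \<and> X 0 = (P0, V0) \<and>
           (\<forall>t\<ge>0. \<forall>i j.
              (P22_entry i j \<longrightarrow> fst (X t) $ i $ j = 0) \<and>
              (V22bar_entry i j \<longrightarrow> snd (X t) $ i $ j = 0))))"
proof -
  interpret S: setting M n \<gamma> \<alpha>
    using M n \<gamma> meas_phi meas_r meas_w mom_phi mom_r mom_w by (rule setting.intro)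
  let ?L = "pop_loss \<gamma> \<alpha> n M"
  obtain G where G: "\<And>x. has_gradient ?L (G x) x" and lG: "locLip G"
    using S.good_L unfolding good_def by (elim conjE exE) (rule that, blast+)
  have p1: "\<forall>(z::('s, 'a, 'd) sample) (P::'d mat) (V::'d mat) P' V'.
        (\<forall>i j. \<not> P_irrel i j \<longrightarrow> P $ i $ j = P' $ i $ j) \<and>
        (\<forall>i j. \<not> V_irrel i j \<longrightarrow> V $ i $ j = V' $ i $ j) \<longrightarrow>
        TF n P V (prompt \<gamma> n z) = TF n P' V' (prompt \<gamma> n z)"
    by (intro allI impI, elim conjE, rule TF_T1)
  have p2: "\<forall>P V. \<exists>g. has_gradient ?L g (P, V) \<and>
        (\<forall>i j. P_irrel i j \<longrightarrow> fst g $ i $ j = 0) \<and>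
        (\<forall>i j. V_irrel i j \<longrightarrow> snd g $ i $ j = 0)"
  proof (intro allI)
    fix P V :: "'d mat"
    show "\<exists>g. has_gradient ?L g (P, V) \<and>
        (\<forall>i j. P_irrel i j \<longrightarrow> fst g $ i $ j = 0) \<and>
        (\<forall>i j. V_irrel i j \<longrightarrow> snd g $ i $ j = 0)"
    proof (intro exI[of _ "G (P, V)"] conjI)
      show "has_gradient ?L (G (P, V)) (P, V)" by (rule G)
      show "\<forall>i j. P_irrel i j \<longrightarrow> fst (G (P, V)) $ i $ j = 0"
        using S.irrel_zero[OF G[of "(P, V)"]] by (rule conjunct1)
      show "\<forall>i j. V_irrel i j \<longrightarrow> snd (G (P, V)) $ i $ j = 0"
        using S.irrel_zero[OF G[of "(P, V)"]] by (rule conjunct2)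
    qed
  qed
  have p3: "\<forall>X. gradient_flow ?L X \<longrightarrow>
        (\<forall>t\<ge>0. \<forall>i j.
           (P_irrel i j \<longrightarrow> fst (X t) $ i $ j = fst (X 0) $ i $ j) \<and>
           (V_irrel i j \<longrightarrow> snd (X t) $ i $ j = snd (X 0) $ i $ j))"
  proof (intro allI impI)
    fix X :: "real \<Rightarrow> 'd mat \<times> 'd mat" and t :: real and i j :: "'d idx"
    assume gf: "gradient_flow ?L X" and t: "0 \<le> t"
    have "\<forall>s. \<exists>g. 0 \<le> s \<longrightarrow> has_gradient ?L g (X s) \<and> (X has_vector_derivative (- g)) (at s within {0..})"
      using gf unfolding gradient_flow_def by blast
    from choice[OF this] obtain gg where gg: "\<And>s. 0 \<le> s \<Longrightarrow> has_gradient ?L (gg s) (X s) \<and>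
        (X has_vector_derivative (- gg s)) (at s within {0..})" by blast
    have d: "\<And>s. 0 \<le> s \<Longrightarrow> (X has_vector_derivative (- gg s)) (at s within {0..})" using gg by blast
    show "(P_irrel i j \<longrightarrow> fst (X t) $ i $ j = fst (X 0) $ i $ j) \<and>
          (V_irrel i j \<longrightarrow> snd (X t) $ i $ j = snd (X 0) $ i $ j)"
    proof (intro conjI impI)
      assume ij: "P_irrel i j"
      have "inner (X t) (um i j, 0) = inner (X 0) (um i j, 0)"
      proof (rule deriv_coord_const[OF d _ t])
        fix s :: real assume s: "0 \<le> s"
        have "has_gradient ?L (gg s) (X s)" using gg[OF s] by (rule conjunct1)
        from conjunct1[OF S.irrel_zero[OF this], rule_format, OF ij]
        have "fst (gg s) $ i $ j = 0" .
        then show "inner (- gg s) (um i j, 0) = 0" by (simp add: coordP[symmetric])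
      qed
      then show "fst (X t) $ i $ j = fst (X 0) $ i $ j" by (simp add: coordP)
    next
      assume ij: "V_irrel i j"
      have "inner (X t) (0, um i j) = inner (X 0) (0, um i j)"
      proof (rule deriv_coord_const[OF d _ t])
        fix s :: real assume s: "0 \<le> s"
        have "has_gradient ?L (gg s) (X s)" using gg[OF s] by (rule conjunct1)
        from conjunct2[OF S.irrel_zero[OF this], rule_format, OF ij]
        have "snd (gg s) $ i $ j = 0" .
        then show "inner (- gg s) (0, um i j) = 0" by (simp add: coordV[symmetric])
      qed
      then show "snd (X t) $ i $ j = snd (X 0) $ i $ j" by (simp add: coordV)
    qed
  qed
  have p4: "\<forall>P V.
        (\<forall>i j. P22_entry i j \<longrightarrow> P $ i $ j = 0) \<and>
        (\<forall>i j. V22bar_entry i j \<longrightarrow> V $ i $ j = 0) \<longrightarrow>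
        (\<exists>g. has_gradient ?L g (P, V) \<and>
           (\<forall>i j. P22_entry i j \<longrightarrow> fst g $ i $ j = 0) \<and>
           (\<forall>i j. V22bar_entry i j \<longrightarrow> snd g $ i $ j = 0))"
  proof (intro allI impI)
    fix P V :: "'d mat"
    assume h: "(\<forall>i j. P22_entry i j \<longrightarrow> P $ i $ j = 0) \<and> (\<forall>i j. V22bar_entry i j \<longrightarrow> V $ i $ j = 0)"
    show "\<exists>g. has_gradient ?L g (P, V) \<and>
           (\<forall>i j. P22_entry i j \<longrightarrow> fst g $ i $ j = 0) \<and>
           (\<forall>i j. V22bar_entry i j \<longrightarrow> snd g $ i $ j = 0)"
    proof (intro exI[of _ "G (P, V)"] conjI)
      show "has_gradient ?L (G (P, V)) (P, V)" by (rule G)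
      have z: "(\<forall>i j. P22_entry i j \<longrightarrow> fst (G (P, V)) $ i $ j = 0) \<and> (\<forall>i j. V22bar_entry i j \<longrightarrow> snd (G (P, V)) $ i $ j = 0)"
        by (rule S.S_zero[OF G[of "(P, V)"]]) (use h in simp_all)
      show "\<forall>i j. P22_entry i j \<longrightarrow> fst (G (P, V)) $ i $ j = 0" using z by (rule conjunct1)
      show "\<forall>i j. V22bar_entry i j \<longrightarrow> snd (G (P, V)) $ i $ j = 0" using z by (rule conjunct2)
    qed
  qed
  have p5: "\<forall>P0 V0.
        (\<forall>i j. P22_entry i j \<longrightarrow> P0 $ i $ j = 0) \<and>
        (\<forall>i j. V22bar_entry i j \<longrightarrow> V0 $ i $ j = 0) \<longrightarrow>
        (\<exists>X. gradient_flow ?L X \<and> X 0 = (P0, V0) \<and>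
           (\<forall>t\<ge>0. \<forall>i j.
              (P22_entry i j \<longrightarrow> fst (X t) $ i $ j = 0) \<and>
              (V22bar_entry i j \<longrightarrow> snd (X t) $ i $ j = 0)))"
  proof (intro allI impI)
    fix P0 V0 :: "'d mat"
    assume h: "(\<forall>i j. P22_entry i j \<longrightarrow> P0 $ i $ j = 0) \<and> (\<forall>i j. V22bar_entry i j \<longrightarrow> V0 $ i $ j = 0)"
    define Gt where "Gt x = proj (G (proj x))" for x
    have Gt: "\<And>x. has_gradient (\<lambda>x. ?L (proj x)) (Gt x) x" and lGt: "locLip Gt"
      unfolding Gt_def using grad_comp[OF G lG proj_linear proj_sa proj_norm] by auto
    have nn: "\<And>x. 0 \<le> ?L (proj x)" by (rule S.pop_loss_nonneg)
    obtain X where X0: "X 0 = (P0, V0)"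
      and Xd: "\<And>t. 0 \<le> t \<Longrightarrow> (X has_vector_derivative - Gt (X t)) (at t within {0..})"
      using gflow_exists[OF nn Gt lGt, of "(P0, V0)"] by blast
    have inS: "(\<forall>i j. P22_entry i j \<longrightarrow> fst (X t) $ i $ j = 0) \<and>
               (\<forall>i j. V22bar_entry i j \<longrightarrow> snd (X t) $ i $ j = 0)" if t: "0 \<le> t" for t
    proof (intro conjI allI impI)
      fix i j :: "'d idx" assume ij: "P22_entry i j"
      have "inner (X t) (um i j, 0) = inner (X 0) (um i j, 0)"
      proof (rule deriv_coord_const[OF Xd _ t])
        fix s :: real assume s: "0 \<le> s"
        show "inner (- Gt (X s)) (um i j, 0) = 0"
          unfolding Gt_def inner_minus_left proj_sa proj_umP[OF ij] by simp
      qed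
      then show "fst (X t) $ i $ j = 0" using h ij X0 by (simp add: coordP[symmetric])
    next
      fix i j :: "'d idx" assume ij: "V22bar_entry i j"
      have "inner (X t) (0, um i j) = inner (X 0) (0, um i j)"
      proof (rule deriv_coord_const[OF Xd _ t])
        fix s :: real assume s: "0 \<le> s"
        show "inner (- Gt (X s)) (0, um i j) = 0"
          unfolding Gt_def inner_minus_left proj_sa proj_umV[OF ij] by simp
      qed
      then show "snd (X t) $ i $ j = 0" using h ij X0 by (simp add: coordV[symmetric])
    qed
    have GtG: "Gt (X t) = G (X t)" if t: "0 \<le> t" for t
    proof -
      have "proj (X t) = X t" using inS[OF t] by (intro proj_id) auto
      moreover have "proj (G (X t)) = G (X t)"
        using S.S_zero[OF G[of "X t"]] inS[OF t] by (intro proj_id) auto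
      ultimately show ?thesis by (simp add: Gt_def)
    qed
    show "\<exists>X. gradient_flow ?L X \<and> X 0 = (P0, V0) \<and>
           (\<forall>t\<ge>0. \<forall>i j.
              (P22_entry i j \<longrightarrow> fst (X t) $ i $ j = 0) \<and>
              (V22bar_entry i j \<longrightarrow> snd (X t) $ i $ j = 0))"
    proof (intro exI conjI)
      show "gradient_flow ?L X"
        unfolding gradient_flow_def
      proof (intro allI impI)
        fix t :: real assume t: "0 \<le> t"
        show "\<exists>g. has_gradient ?L g (X t) \<and> (X has_vector_derivative - g) (at t within {0..})"
          using G[of "X t"] Xd[OF t] unfolding GtG[OF t] by (intro exI[of _ "G (X t)"] conjI)
      qed
      show "X 0 = (P0, V0)" by (rule X0)
      show "\<forall>t\<ge>0. \<forall>i j. (P22_entry i j \<longrightarrow> fst (X t) $ i $ j = 0) \<and>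
              (V22bar_entry i j \<longrightarrow> snd (X t) $ i $ j = 0)"
        using inS by blast
    qed
  qed
  show ?thesis by (intro conjI p1 p2 p3 p4 p5)
qed

end
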